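(* For $j\ge 0$ let $S_j$ be the symmetric group of $J_j=\{1,\dots,j\}$ ($J_0=\varnothing$, $S_0$ trivial), let $G_j=S_j\times S_j$ and let $K_j=\{(\tau,\tau):\tau\in S_j\}\subset G_j$ be the diagonal subgroup. Let $G_j/\!/K_j$ be the set of orbits of $K_j$ acting on $G_j$ by conjugation, and let $\mathcal{C}=\coprod_{j\ge 0} G_j/\!/K_j$ (disjoint union, so a class remembers its index $j$). For $c\in G_j/\!/K_j$ with representative $g\in G_j$ and $N\ge 0$ define $A_N[c]\in\mathbb{C}(G_N)$ by $$A_N[c]=\frac{1}{(N-j)!}\sum_{\tau\in K_N}\tau^{-1}\tilde g\,\tau \quad\text{if } N\ge j,\qquad A_N[c]=0\quad\text{if } N<j,$$ where $\tilde g$ is $g$ regarded as an element of $G_N\supseteq G_j$. Then there exist non-negative integers $a^{e}_{c,d}$ ($c,d,e\in\mathcal{C}$), not depending on $N$ and with only finitely many $e$ having $a^e_{c,d}\neq 0$ for fixed $c,d$, such that: (i) for every $N\ge 0$ and all $c,d\in\mathcal{C}$, $A_N[c]*A_N[d]=\sum_{e\in\mathcal{C}} a^{e}_{c,d}\,A_N[e]$ in $\mathbb{C}(G_N)$; (ii) on the complex vector space $\mathcal{B}$ with basis $\{A[c]: c\in\mathcal{C}\}$, the formula $A[c]*A[d]=\sum_{e} a^e_{c,d}A[e]$ (extended bilinearly) defines a structure of an associative algebra.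
   Context: $\mathbb{C}(G)$ denotes the group algebra of a finite group $G$ with convolution $*$. $S_j$ is regarded as the subgroup of $S_N$ ($j\le N$) fixing all points of $J_N\setminus J_j$, and hence $G_j\subseteq G_N$. The element $A_N[c]$ does not depend on the choice of representative $g$. *)

theory Defs
  imports Complex_Main "HOL-Combinatorics.Permutations"
begin

type_synonym perm = "nat \<Rightarrow> nat"
type_synonym gel = "perm \<times> perm"
type_synonym cls = "nat \<times> gel set"       (* class: index j together with a K_j-orbit in G_j *)

text \<open>S_j: permutations of {1..j}, fixing all other naturals (so S_j \<subseteq> S_N for j \<le> N).\<close>
definition Sym :: "nat \<Rightarrow> perm set" where
  "Sym j = {p. p permutes {1..j}}"

definition Gr :: "nat \<Rightarrow> gel set" where
  "Gr j = Sym j \<times> Sym j"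

definition gmul :: "gel \<Rightarrow> gel \<Rightarrow> gel" where
  "gmul x y = (fst x \<circ> fst y, snd x \<circ> snd y)"

definition ginv :: "gel \<Rightarrow> gel" where
  "ginv x = (inv (fst x), inv (snd x))"

definition conjK :: "perm \<Rightarrow> gel \<Rightarrow> gel" where
  "conjK t g = gmul (ginv (t, t)) (gmul g (t, t))"

definition Korbit :: "nat \<Rightarrow> gel \<Rightarrow> gel set" where
  "Korbit j g = {conjK t g | t. t \<in> Sym j}"

definition classes :: "cls set" where
  "classes = {(j, Korbit j g) | j g. g \<in> Gr j}"

definition rep :: "cls \<Rightarrow> gel" where
  "rep c = (SOME g. g \<in> snd c)"

text \<open>Group algebra \<complex>(G_N): functions G_N \<rightarrow> \<complex> (zero outside G_N), with convolution.\<close>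
definition conv :: "nat \<Rightarrow> (gel \<Rightarrow> complex) \<Rightarrow> (gel \<Rightarrow> complex) \<Rightarrow> gel \<Rightarrow> complex" where
  "conv N f h x = (if x \<in> Gr N then (\<Sum>y\<in>Gr N. f y * h (gmul (ginv y) x)) else 0)"

definition AN :: "nat \<Rightarrow> cls \<Rightarrow> gel \<Rightarrow> complex" where
  "AN N c x = (if fst c \<le> N
     then (1 / of_nat (fact (N - fst c))) *
          (\<Sum>t\<in>Sym N. (if conjK t (rep c) = x then 1 else 0))
     else 0)"

text \<open>The abstract space \<B>: finitely supported coefficient vectors on the basis {A[c] | c \<in> \<C>}.\<close>
definition Bspace :: "(cls \<Rightarrow> complex) set" where
  "Bspace = {u. (\<forall>c. c \<notin> classes \<longrightarrow> u c = 0) \<and> finite {c. u c \<noteq> 0}}"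

definition Bmul :: "(cls \<Rightarrow> cls \<Rightarrow> cls \<Rightarrow> nat) \<Rightarrow> (cls \<Rightarrow> complex) \<Rightarrow> (cls \<Rightarrow> complex) \<Rightarrow> cls \<Rightarrow> complex" where
  "Bmul a u v = (\<lambda>e. if e \<in> classes then
      (\<Sum>c\<in>{c. u c \<noteq> 0}. \<Sum>d\<in>{d. v d \<noteq> 0}. u c * v d * of_nat (a c d e)) else 0)"

definition Bbasis :: "cls \<Rightarrow> cls \<Rightarrow> complex" where
  "Bbasis c = (\<lambda>e. if e = c then 1 else 0)"

end

theory Submission
  imports Defs "HOL-Library.FuncSet"
begin

lemma Sym_iff: "p \<in> Sym j \<longleftrightarrow> p permutes {1..j}"
  by (simp add: Sym_def)

lemma finite_Sym: "finite (Sym j)"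
  unfolding Sym_def by (rule finite_permutations) simp

lemma Sym_mono: "j \<le> N \<Longrightarrow> p \<in> Sym j \<Longrightarrow> p \<in> Sym N"
  unfolding Sym_def by (auto intro: permutes_subset)

lemma id_Sym: "id \<in> Sym j" by (simp add: Sym_def)

lemma Sym_comp: "p \<in> Sym j \<Longrightarrow> q \<in> Sym j \<Longrightarrow> p \<circ> q \<in> Sym j"
  unfolding Sym_def by (simp add: permutes_compose)

lemma Sym_inv: "p \<in> Sym j \<Longrightarrow> inv p \<in> Sym j"
  unfolding Sym_def by (simp add: permutes_inv)

lemma Sym_bij: "p \<in> Sym j \<Longrightarrow> bij p"
  unfolding Sym_def by (simp add: permutes_bij)

lemma finite_Gr: "finite (Gr j)"
  unfolding Gr_def using finite_Sym by simp

lemma Gr_mono: "j \<le> N \<Longrightarrow> g \<in> Gr j \<Longrightarrow> g \<in> Gr N"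
  unfolding Gr_def by (auto intro: Sym_mono)

lemma gmul_Gr: "x \<in> Gr N \<Longrightarrow> y \<in> Gr N \<Longrightarrow> gmul x y \<in> Gr N"
  unfolding Gr_def gmul_def by (auto intro: Sym_comp)

lemma ginv_Gr: "x \<in> Gr N \<Longrightarrow> ginv x \<in> Gr N"
  unfolding Gr_def ginv_def by (auto intro: Sym_inv)

lemma gmul_assoc: "gmul (gmul x y) z = gmul x (gmul y z)"
  by (simp add: gmul_def o_assoc)

lemma bij_inv_comp_cancel: "bij p \<Longrightarrow> inv p \<circ> (p \<circ> q) = q"
  by (metis bij_is_inj inv_o_cancel comp_assoc id_comp)

lemma bij_comp_inv_cancel: "bij p \<Longrightarrow> p \<circ> (inv p \<circ> q) = q"
  by (metis bij_is_surj surj_iff comp_assoc id_comp)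

lemma gmul_ginv_cancel: "x \<in> Gr N \<Longrightarrow> gmul (ginv x) (gmul x y) = y"
  unfolding Gr_def gmul_def ginv_def by (auto simp: bij_inv_comp_cancel Sym_bij)

lemma gmul_ginv_cancel2: "x \<in> Gr N \<Longrightarrow> gmul x (gmul (ginv x) y) = y"
  unfolding Gr_def gmul_def ginv_def by (auto simp: bij_comp_inv_cancel Sym_bij)

lemma ginv_gmul: "x \<in> Gr N \<Longrightarrow> y \<in> Gr N \<Longrightarrow> ginv (gmul x y) = gmul (ginv y) (ginv x)"
  unfolding Gr_def gmul_def ginv_def by (auto simp: o_inv_distrib Sym_bij)

lemma conjK_Gr: "t \<in> Sym N \<Longrightarrow> g \<in> Gr N \<Longrightarrow> conjK t g \<in> Gr N"
  unfolding conjK_def by (intro gmul_Gr ginv_Gr) (auto simp: Gr_def)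

lemma conjK_eq: "conjK t g = (inv t \<circ> fst g \<circ> t, inv t \<circ> snd g \<circ> t)"
  by (simp add: conjK_def gmul_def ginv_def o_assoc)

lemma conjK_id[simp]: "conjK id g = g"
  by (simp add: conjK_eq)

lemma conjK_comp: "bij t \<Longrightarrow> bij s \<Longrightarrow> conjK s (conjK t g) = conjK (t \<circ> s) g"
  by (simp add: conjK_eq o_inv_distrib o_assoc)

lemma conjK_gmul: "bij t \<Longrightarrow> conjK t (gmul x y) = gmul (conjK t x) (conjK t y)"
  by (simp add: conjK_eq gmul_def fun_eq_iff bij_is_surj surj_f_inv_f)

lemma conjK_inv_cancel: "bij t \<Longrightarrow> conjK (inv t) (conjK t g) = g"
  proof -
  assume b: "bij t"
  have "t \<circ> inv t = id" using b by (meson bij_is_surj surj_iff)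
  then show ?thesis using b by (simp add: conjK_comp bij_imp_bij_inv)
qed

definition Inj :: "nat \<Rightarrow> nat \<Rightarrow> perm set" where
  "Inj j N = {\<iota> \<in> {1..j} \<rightarrow>\<^sub>E {1..N}. inj_on \<iota> {1..j}}"

definition pushg :: "nat \<Rightarrow> perm \<Rightarrow> gel \<Rightarrow> gel" where
  "pushg j \<iota> g = (map_permutation {1..j} \<iota> (fst g), map_permutation {1..j} \<iota> (snd g))"

lemma finite_Inj: "finite (Inj j N)"
proof -
  have "finite ({1..j} \<rightarrow>\<^sub>E {1..N})" by (simp add: finite_PiE)
  then show ?thesis unfolding Inj_def by simp
qed

lemma InjD: assumes "\<iota> \<in> Inj j N"
  shows "inj_on \<iota> {1..j}" "\<iota> ` {1..j} \<subseteq> {1..N}" "\<And>i. i \<notin> {1..j} \<Longrightarrow> \<iota> i = undefined"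
  using assms unfolding Inj_def by (auto simp: PiE_def extensional_def)

lemma Inj_le: assumes "\<iota> \<in> Inj j N" shows "j \<le> N"
proof -
  have "card {1..j} \<le> card {1..N}"
    using InjD[OF assms] by (intro card_inj_on_le) auto
  then show ?thesis by simp
qed

lemma restrict_Inj: assumes "inj_on u {1..j}" "u ` {1..j} \<subseteq> {1..N}" shows "restrict u {1..j} \<in> Inj j N"
proof -
  have "restrict u {1..j} \<in> {1..j} \<rightarrow>\<^sub>E {1..N}" using assms(2) unfolding restrict_PiE_iff by blast
  moreover have "inj_on (restrict u {1..j}) {1..j}"
    using assms(1) inj_on_cong[of "{1..j}" "restrict u {1..j}" u] by simp
  ultimately show ?thesis unfolding Inj_def by simp
qed

lemma Inj_eqI: "\<iota> \<in> Inj j N \<Longrightarrow> \<kappa> \<in> Inj j N \<Longrightarrow> (\<And>i. i \<in> {1..j} \<Longrightarrow> \<iota> i = \<kappa> i) \<Longrightarrow> \<iota> = \<kappa>"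
proof (rule ext)
  fix i assume a: "\<iota> \<in> Inj j N" "\<kappa> \<in> Inj j N" "\<And>i. i \<in> {1..j} \<Longrightarrow> \<iota> i = \<kappa> i"
  show "\<iota> i = \<kappa> i"
  proof (cases "i \<in> {1..j}")
    case True then show ?thesis using a(3) by blast
  next
    case False then show ?thesis using InjD(3)[OF a(1)] InjD(3)[OF a(2)] by simp
  qed
qed

lemma map_permutation_permutes':
  assumes "inj_on f A" "f ` A \<subseteq> B" "p permutes A"
  shows "map_permutation A f p permutes B"
proof -
  have "bij_betw f A (f ` A)" using assms(1) by (simp add: bij_betw_def)
  then have "map_permutation A f p permutes (f ` A)"
    using assms(3) by (rule map_permutation_permutes)
  then show ?thesis using assms(2) by (rule permutes_subset)
qed

lemma GrE: assumes "g \<in> Gr j" obtains p q where "g = (p, q)" "p permutes {1..j}" "q permutes {1..j}"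
  using assms unfolding Gr_def Sym_def by (cases g) auto

lemma pushg_Gr': assumes "inj_on \<iota> {1..j}" "\<iota> ` {1..j} \<subseteq> {1..N}" "g \<in> Gr j" shows "pushg j \<iota> g \<in> Gr N"
proof -
  obtain p q where g: "g = (p, q)" "p permutes {1..j}" "q permutes {1..j}" using assms(3) by (rule GrE)
  have A: "map_permutation {1..j} \<iota> p permutes {1..N}" using assms(1,2) g(2) by (rule map_permutation_permutes')
  have B: "map_permutation {1..j} \<iota> q permutes {1..N}" using assms(1,2) g(3) by (rule map_permutation_permutes')
  have e: "pushg j \<iota> g = (map_permutation {1..j} \<iota> p, map_permutation {1..j} \<iota> q)"
    unfolding pushg_def g(1) by simp
  have "(map_permutation {1..j} \<iota> p, map_permutation {1..j} \<iota> q) \<in> Gr N"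
    unfolding Gr_def Sym_def using A B by blast
  then show ?thesis using e by simp
qed

lemma pushg_Gr: assumes "\<iota> \<in> Inj j N" "g \<in> Gr j" shows "pushg j \<iota> g \<in> Gr N"
  by (rule pushg_Gr'[OF InjD(1)[OF assms(1)] InjD(2)[OF assms(1)] assms(2)])

lemma pushg_gmul: assumes "inj_on \<iota> {1..j}" "y \<in> Gr j" "z \<in> Gr j"
  shows "pushg j \<iota> (gmul y z) = gmul (pushg j \<iota> y) (pushg j \<iota> z)"
proof -
  obtain p q where y: "y = (p, q)" "p permutes {1..j}" "q permutes {1..j}" using assms(2) by (rule GrE)
  obtain r s where z: "z = (r, s)" "r permutes {1..j}" "s permutes {1..j}" using assms(3) by (rule GrE)
  have e1: "map_permutation {1..j} \<iota> (p \<circ> r) = map_permutation {1..j} \<iota> p \<circ> map_permutation {1..j} \<iota> r"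
    by (rule map_permutation_compose'[OF assms(1) z(2)])
  have e2: "map_permutation {1..j} \<iota> (q \<circ> s) = map_permutation {1..j} \<iota> q \<circ> map_permutation {1..j} \<iota> s"
    by (rule map_permutation_compose'[OF assms(1) z(3)])
  show ?thesis by (simp only: y z pushg_def gmul_def fst_conv snd_conv e1 e2)
qed

lemma pushg_cong: assumes "\<And>i. i \<in> {1..j} \<Longrightarrow> \<iota> i = \<kappa> i" "inj_on \<iota> {1..j}" "g \<in> Gr j"
  shows "pushg j \<iota> g = pushg j \<kappa> g"
proof -
  obtain p q where y: "g = (p, q)" "p permutes {1..j}" "q permutes {1..j}" using assms(3) by (rule GrE)
  have e1: "map_permutation {1..j} \<iota> p = map_permutation {1..j} \<kappa> p"
    by (rule map_permutation_cong[OF assms(2) y(2) refl assms(1)]) auto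
  have e2: "map_permutation {1..j} \<iota> q = map_permutation {1..j} \<kappa> q"
    by (rule map_permutation_cong[OF assms(2) y(3) refl assms(1)]) auto
  show ?thesis by (simp only: y pushg_def fst_conv snd_conv e1 e2)
qed

lemma map_permutation_superset:
  assumes "q permutes B" "B \<subseteq> C" "inj_on e C"
  shows "map_permutation C e q = map_permutation B e q"
proof
  fix y
  show "map_permutation C e q y = map_permutation B e q y"
  proof (cases "y \<in> e ` C")
    case True
    then obtain x where x: "x \<in> C" "y = e x" by blast
    have inB: "inj_on e B" using assms(3) assms(2) by (rule inj_on_subset)
    show ?thesis
    proof (cases "x \<in> B")
      case True
      then show ?thesis using x assms inB
        by (simp add: map_permutation_apply)
    next
      case False
      then have "q x = x" using assms(1) by (simp add: permutes_not_in)
      moreover have "y \<notin> e ` B" using False x assms(2,3) by (auto simp: inj_on_def)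
      ultimately show ?thesis using x assms
        by (simp add: map_permutation_apply map_permutation_def)
    qed
  next
    case False
    then have "y \<notin> e ` B" using assms(2) by auto
    then show ?thesis using False by (simp add: map_permutation_def)
  qed
qed

lemma pushg_comp:
  assumes "\<alpha> \<in> Inj j l" "inj_on e {1..l}" "g \<in> Gr j"
  shows "pushg l e (pushg j \<alpha> g) = pushg j (e \<circ> \<alpha>) g"
proof -
  have b: "bij_betw \<alpha> {1..j} (\<alpha> ` {1..j})" using InjD(1)[OF assms(1)] by (simp add: bij_betw_def)
  have ie: "inj_on e (\<alpha> ` {1..j})" using assms(2) InjD(2)[OF assms(1)] by (rule inj_on_subset)
  have "\<And>p. p permutes {1..j} \<Longrightarrow> map_permutation {1..l} e (map_permutation {1..j} \<alpha> p)
        = map_permutation {1..j} (e \<circ> \<alpha>) p"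
  proof -
    fix p assume p: "p permutes {1..j}"
    have "map_permutation {1..j} \<alpha> p permutes (\<alpha> ` {1..j})"
      using b p by (rule map_permutation_permutes)
    then have "map_permutation {1..l} e (map_permutation {1..j} \<alpha> p)
        = map_permutation (\<alpha> ` {1..j}) e (map_permutation {1..j} \<alpha> p)"
      using InjD(2)[OF assms(1)] assms(2) by (rule map_permutation_superset)
    also have "\<dots> = map_permutation {1..j} (e \<circ> \<alpha>) p"
      using b ie by (rule map_permutation_compose)
    finally show "map_permutation {1..l} e (map_permutation {1..j} \<alpha> p)
        = map_permutation {1..j} (e \<circ> \<alpha>) p" .
  qed
  then show ?thesis using assms(3) unfolding pushg_def Gr_def Sym_def by auto
qed

lemma push_inv:
  assumes "t permutes {1..N}" "j \<le> N" "p permutes {1..j}"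
  shows "map_permutation {1..j} (inv t) p = inv t \<circ> p \<circ> t"
proof
  fix y
  have bt: "bij t" using assms(1) by (rule permutes_bij)
  have it: "inj_on (inv t) {1..j}" by (rule inj_on_subset[OF bij_is_inj[OF bij_imp_bij_inv[OF bt]] subset_UNIV])
  show "map_permutation {1..j} (inv t) p y = (inv t \<circ> p \<circ> t) y"
  proof (cases "t y \<in> {1..j}")
    case True
    have "y = inv t (t y)" using bt by (simp add: bij_is_inj)
    then have "map_permutation {1..j} (inv t) p y = inv t (p (t y))"
      using map_permutation_apply[OF it True, of p] by simp
    then show ?thesis by simp
  next
    case False
    then have "p (t y) = t y" using assms(3) by (simp add: permutes_not_in)
    moreover have "y \<notin> inv t ` {1..j}"
      using False bt by (auto simp: bij_is_surj surj_f_inv_f)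
    ultimately show ?thesis using bt by (simp add: map_permutation_def bij_is_inj)
  qed
qed

lemma conjK_pushg: assumes "t \<in> Sym N" "j \<le> N" "g \<in> Gr j" shows "conjK t g = pushg j (inv t) g"
proof -
  obtain p q where y: "g = (p, q)" "p permutes {1..j}" "q permutes {1..j}" using assms(3) by (rule GrE)
  have t: "t permutes {1..N}" using assms(1) by (simp add: Sym_def)
  show ?thesis unfolding y(1) conjK_eq pushg_def fst_conv snd_conv
    using push_inv[OF t assms(2) y(2)] push_inv[OF t assms(2) y(3)] by simp
qed

lemma extend_Inj:
  assumes "\<iota> \<in> Inj j N"
  shows "\<exists>u. u permutes {1..N} \<and> (\<forall>i\<in>{1..j}. u i = \<iota> i)"
proof -
  let ?A = "{1..j}" and ?S = "{1..N}" and ?B = "\<iota> ` {1..j}"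
  have jN: "j \<le> N" using assms by (rule Inj_le)
  have inj: "inj_on \<iota> ?A" by (rule InjD(1)[OF assms])
  have BS: "?B \<subseteq> ?S" by (rule InjD(2)[OF assms])
  have AS: "?A \<subseteq> ?S" using jN by auto
  have cB: "card ?B = j" using inj by (simp add: card_image)
  have "card (?S - ?A) = N - j" using AS by (simp add: card_Diff_subset)
  moreover have "card (?S - ?B) = N - j" using BS cB by (simp add: card_Diff_subset)
  ultimately obtain h where h: "bij_betw h (?S - ?A) (?S - ?B)"
    using finite_same_card_bij[of "?S - ?A" "?S - ?B"] by auto
  define f where "f x = (if x \<in> ?A then \<iota> x else h x)" for x
  have b1: "bij_betw \<iota> ?A ?B" using inj by (rule bij_betw_imageI) (rule refl)
  have f1: "bij_betw f ?A ?B"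
    by (rule bij_betw_cong[THEN iffD2, OF _ b1]) (simp add: f_def)
  have f2: "bij_betw f (?S - ?A) (?S - ?B)"
    by (rule bij_betw_cong[THEN iffD2, OF _ h]) (simp add: f_def)
  have "bij_betw f (?A \<union> (?S - ?A)) (?B \<union> (?S - ?B))"
    using f1 f2 by (rule bij_betw_combine) auto
  moreover have "?A \<union> (?S - ?A) = ?S" using AS by auto
  moreover have "?B \<union> (?S - ?B) = ?S" using BS by auto
  ultimately have "bij_betw f ?S ?S" by simp
  then have "restrict_id f ?S permutes ?S" by (rule permutes_restrict_id)
  moreover have "\<forall>i\<in>?A. restrict_id f ?S i = \<iota> i"
  proof
    fix i assume i: "i \<in> ?A"
    then have "i \<in> ?S" using AS by (rule subsetD[rotated])
    then show "restrict_id f ?S i = \<iota> i" using i by (simp add: f_def)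
  qed
  ultimately show ?thesis by blast
qed

lemma permutes_fix_diff:
  assumes "v permutes S" "\<And>x. x \<in> T \<Longrightarrow> v x = x"
  shows "v permutes (S - T)"
  using assms unfolding permutes_def by blast

lemma fiber_card:
  assumes "\<iota> \<in> Inj j N"
  shows "card {u. u permutes {1..N} \<and> (\<forall>i\<in>{1..j}. u i = \<iota> i)} = fact (N - j)"
proof -
  obtain u0 where u0: "u0 permutes {1..N}" "\<forall>i\<in>{1..j}. u0 i = \<iota> i"
    using extend_Inj[OF assms] by blast
  have jN: "j \<le> N" using assms by (rule Inj_le)
  have bu: "bij u0" using u0(1) by (rule permutes_bij)
  let ?F = "{u. u permutes {1..N} \<and> (\<forall>i\<in>{1..j}. u i = \<iota> i)}"
  let ?P = "{s. s permutes {Suc j..N}}"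
  have sub: "{Suc j..N} \<subseteq> {1..N}" by auto
  have "card ?P = card ?F"
  proof (rule card_bij_eq[of "\<lambda>s. u0 \<circ> s" _ _ "\<lambda>u. inv u0 \<circ> u"])
    show "inj_on ((\<circ>) u0) ?P"
      by (rule inj_onI) (metis bu bij_inv_comp_cancel)
    show "inj_on ((\<circ>) (inv u0)) ?F"
      by (rule inj_onI) (metis bu bij_comp_inv_cancel)
    show "(\<circ>) u0 ` ?P \<subseteq> ?F"
    proof
      fix v assume "v \<in> (\<circ>) u0 ` ?P"
      then obtain s where s: "s permutes {Suc j..N}" "v = u0 \<circ> s" by blast
      have "s permutes {1..N}" using s(1) sub by (rule permutes_subset)
      then have "v permutes {1..N}" using u0(1) s(2) by (simp add: permutes_compose)
      moreover have "\<forall>i\<in>{1..j}. v i = \<iota> i"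
        using s u0(2) by (auto simp: permutes_not_in)
      ultimately show "v \<in> ?F" by blast
    qed
    show "(\<circ>) (inv u0) ` ?F \<subseteq> ?P"
    proof
      fix v assume "v \<in> (\<circ>) (inv u0) ` ?F"
      then obtain u where u: "u permutes {1..N}" "\<forall>i\<in>{1..j}. u i = \<iota> i" "v = inv u0 \<circ> u" by blast
      have "v permutes {1..N}" using u permutes_inv[OF u0(1)] by (simp add: permutes_compose)
      moreover have "\<And>x. x \<in> {1..j} \<Longrightarrow> v x = x"
      proof -
        fix x assume x: "x \<in> {1..j}"
        have "v x = inv u0 (u0 x)" using u(2,3) u0(2) x by simp
        also have "\<dots> = x" using bu by (simp add: bij_is_inj)
        finally show "v x = x" .
      qed
      ultimately have "v permutes ({1..N} - {1..j})" by (rule permutes_fix_diff)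
      moreover have "{1..N} - {1..j} = {Suc j..N}" by auto
      ultimately show "v \<in> ?P" by simp
    qed
    show "finite ?P" by (simp add: finite_permutations)
    show "finite ?F"
      by (rule finite_subset[of _ "{u. u permutes {1..N}}"]) (auto simp: finite_permutations)
  qed
  moreover have "card ?P = fact (N - j)" by (simp add: card_permutations)
  ultimately show ?thesis by simp
qed

lemma sum_indicator_card:
  "finite A \<Longrightarrow> (\<Sum>t\<in>A. if P t then (1::complex) else 0) = of_nat (card {t\<in>A. P t})"
  by (simp add: sum.inter_filter[symmetric])

lemma finite_Sym_sub: "finite {t\<in>Sym N. P t}"
  using finite_Sym by simp

lemma count_conj:
  assumes jN: "j \<le> N" and g: "g \<in> Gr j"
  shows "card {t\<in>Sym N. conjK t g = x} = fact (N - j) * card {\<iota>\<in>Inj j N. pushg j \<iota> g = x}"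
proof -
  let ?F = "\<lambda>\<iota>. {u. u permutes {1..N} \<and> (\<forall>i\<in>{1..j}. u i = \<iota> i)}"
  let ?I = "{\<iota>\<in>Inj j N. pushg j \<iota> g = x}"
  have 1: "card {t\<in>Sym N. conjK t g = x} = card {u\<in>Sym N. pushg j u g = x}"
  proof (rule card_bij_eq[of inv _ _ inv])
    show "inj_on inv {t \<in> Sym N. conjK t g = x}"
      by (rule inj_onI) (metis (no_types, lifting) mem_Collect_eq inv_inv_eq Sym_bij)
    show "inj_on inv {u \<in> Sym N. pushg j u g = x}"
      by (rule inj_onI) (metis (no_types, lifting) mem_Collect_eq inv_inv_eq Sym_bij)
    show "inv ` {t \<in> Sym N. conjK t g = x} \<subseteq> {u \<in> Sym N. pushg j u g = x}"
    proof
      fix u assume "u \<in> inv ` {t \<in> Sym N. conjK t g = x}"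
      then obtain t where t: "t \<in> Sym N" "conjK t g = x" "u = inv t" by blast
      have "pushg j u g = x" using conjK_pushg[OF t(1) jN g] t(2,3) by simp
      moreover have "u \<in> Sym N" using t(1,3) Sym_inv by simp
      ultimately show "u \<in> {u \<in> Sym N. pushg j u g = x}" by simp
    qed
    show "inv ` {u \<in> Sym N. pushg j u g = x} \<subseteq> {t \<in> Sym N. conjK t g = x}"
    proof
      fix t assume "t \<in> inv ` {u \<in> Sym N. pushg j u g = x}"
      then obtain u where u: "u \<in> Sym N" "pushg j u g = x" "t = inv u" by blast
      have ts: "t \<in> Sym N" using u(1,3) Sym_inv by simp
      have "inv t = u" using u(3) Sym_bij[OF u(1)] by (simp add: inv_inv_eq)
      then have "conjK t g = x" using conjK_pushg[OF ts jN g] u(2) by simp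
      then show "t \<in> {t \<in> Sym N. conjK t g = x}" using ts by simp
    qed
    show "finite {t \<in> Sym N. conjK t g = x}" by (rule finite_Sym_sub)
    show "finite {u \<in> Sym N. pushg j u g = x}" by (rule finite_Sym_sub)
  qed
  have 2: "{u\<in>Sym N. pushg j u g = x} = (\<Union>\<iota>\<in>?I. ?F \<iota>)"
  proof
    show "{u\<in>Sym N. pushg j u g = x} \<subseteq> (\<Union>\<iota>\<in>?I. ?F \<iota>)"
    proof
      fix u assume "u \<in> {u\<in>Sym N. pushg j u g = x}"
      then have u: "u permutes {1..N}" "pushg j u g = x" by (auto simp: Sym_def)
      have iu: "inj_on u {1..j}" using u(1) by (rule permutes_inj_on)
      have "u ` {1..j} \<subseteq> {1..N}"
      proof
        fix y assume "y \<in> u ` {1..j}"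
        then obtain i where i: "i \<in> {1..j}" "y = u i" by blast
        have "i \<in> {1..N}" using i(1) jN by simp
        then show "y \<in> {1..N}" by (simp only: i(2) permutes_in_image[OF u(1)])
      qed
      then have r: "restrict u {1..j} \<in> Inj j N" using iu by (intro restrict_Inj)
      have "pushg j u g = pushg j (restrict u {1..j}) g"
        by (rule pushg_cong[OF _ iu g]) simp
      then have "restrict u {1..j} \<in> ?I" using r u(2) by simp
      moreover have "u \<in> ?F (restrict u {1..j})" using u(1) by simp
      ultimately show "u \<in> (\<Union>\<iota>\<in>?I. ?F \<iota>)" by blast
    qed
    show "(\<Union>\<iota>\<in>?I. ?F \<iota>) \<subseteq> {u\<in>Sym N. pushg j u g = x}"
    proof
      fix u assume "u \<in> (\<Union>\<iota>\<in>?I. ?F \<iota>)"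
      then obtain \<iota> where i: "\<iota> \<in> Inj j N" "pushg j \<iota> g = x" "u permutes {1..N}" "\<forall>i\<in>{1..j}. u i = \<iota> i"
        by blast
      have iu: "inj_on u {1..j}" using i(3) by (rule permutes_inj_on)
      have "pushg j u g = pushg j \<iota> g"
        by (rule pushg_cong[OF _ iu g]) (use i(4) in blast)
      then show "u \<in> {u\<in>Sym N. pushg j u g = x}" using i by (simp add: Sym_def)
    qed
  qed
  have 3: "card (\<Union>\<iota>\<in>?I. ?F \<iota>) = (\<Sum>\<iota>\<in>?I. card (?F \<iota>))"
  proof (rule card_UN_disjoint)
    show "finite ?I" using finite_Inj by simp
    show "\<forall>i\<in>?I. finite (?F i)"
    proof
      fix i show "finite (?F i)"
        by (rule finite_subset[OF _ finite_permutations[of "{1..N}"]]) auto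
    qed
    show "\<forall>i\<in>?I. \<forall>k\<in>?I. i \<noteq> k \<longrightarrow> ?F i \<inter> ?F k = {}"
    proof (intro ballI impI)
      fix i k assume i: "i \<in> ?I" and k: "k \<in> ?I" and ne: "i \<noteq> k"
      show "?F i \<inter> ?F k = {}"
      proof (rule ccontr)
        assume "?F i \<inter> ?F k \<noteq> {}"
        then obtain u where "u \<in> ?F i" "u \<in> ?F k" by blast
        then have "\<And>a. a \<in> {1..j} \<Longrightarrow> i a = k a" by simp
        moreover have "i \<in> Inj j N" using i by simp
        moreover have "k \<in> Inj j N" using k by simp
        ultimately have "i = k" by (intro Inj_eqI[of i j N k])
        then show False using ne by simp
      qed
    qed
  qed
  have 4: "(\<Sum>\<iota>\<in>?I. card (?F \<iota>)) = (\<Sum>\<iota>\<in>?I. fact (N - j))"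
  proof (rule sum.cong[OF refl])
    fix i assume "i \<in> ?I"
    then have "i \<in> Inj j N" by simp
    then show "card (?F i) = fact (N - j)" by (rule fiber_card)
  qed
  have 5: "(\<Sum>\<iota>\<in>?I. fact (N - j)) = fact (N - j) * card ?I" by simp
  show ?thesis unfolding 1 2 3 4 5 ..
qed

lemma conjK_id_Sym: "g \<in> Korbit j g"
  unfolding Korbit_def using id_Sym by (metis (mono_tags, lifting) conjK_id mem_Collect_eq)

lemma Korbit_Gr: "g \<in> Gr j \<Longrightarrow> Korbit j g \<subseteq> Gr j"
  unfolding Korbit_def using conjK_Gr by blast

lemma Korbit_conj:
  assumes "t0 \<in> Sym j"
  shows "Korbit j (conjK t0 g) = Korbit j g"
proof
  have b0: "bij t0" using assms by (rule Sym_bij)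
  show "Korbit j (conjK t0 g) \<subseteq> Korbit j g"
  proof
    fix y assume "y \<in> Korbit j (conjK t0 g)"
    then obtain s where s: "s \<in> Sym j" "y = conjK s (conjK t0 g)" unfolding Korbit_def by blast
    have "y = conjK (t0 \<circ> s) g" using s conjK_comp[OF b0 Sym_bij[OF s(1)]] by simp
    moreover have "t0 \<circ> s \<in> Sym j" using assms s(1) by (rule Sym_comp)
    ultimately show "y \<in> Korbit j g" unfolding Korbit_def by blast
  qed
  show "Korbit j g \<subseteq> Korbit j (conjK t0 g)"
  proof
    fix y assume "y \<in> Korbit j g"
    then obtain s where s: "s \<in> Sym j" "y = conjK s g" unfolding Korbit_def by blast
    have "conjK (inv t0 \<circ> s) (conjK t0 g) = conjK (t0 \<circ> (inv t0 \<circ> s)) g"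
      using conjK_comp[OF b0, of "inv t0 \<circ> s"] Sym_bij[OF Sym_comp[OF Sym_inv[OF assms] s(1)]] by simp
    also have "t0 \<circ> (inv t0 \<circ> s) = s" using b0 by (rule bij_comp_inv_cancel)
    finally have e: "conjK (inv t0 \<circ> s) (conjK t0 g) = conjK s g" .
    have "y = conjK (inv t0 \<circ> s) (conjK t0 g)" using e s(2) by (simp only:)
    moreover have "inv t0 \<circ> s \<in> Sym j" using Sym_comp[OF Sym_inv[OF assms] s(1)] .
    ultimately show "y \<in> Korbit j (conjK t0 g)" unfolding Korbit_def by blast
  qed
qed

lemma Korbit_mem_eq: "y \<in> Korbit j g \<Longrightarrow> Korbit j y = Korbit j g"
  unfolding Korbit_def using Korbit_conj[unfolded Korbit_def] by blast

lemma classesE: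
  assumes "c \<in> classes"
  obtains g where "c = (fst c, Korbit (fst c) g)" "g \<in> Gr (fst c)"
  using assms unfolding classes_def by auto

lemma rep_props:
  assumes "c \<in> classes"
  shows "rep c \<in> snd c" "rep c \<in> Gr (fst c)" "snd c = Korbit (fst c) (rep c)"
proof -
  obtain g where g: "c = (fst c, Korbit (fst c) g)" "g \<in> Gr (fst c)" using assms by (rule classesE)
  have "g \<in> snd c" using g(1) conjK_id_Sym by (metis snd_conv)
  then show r: "rep c \<in> snd c" unfolding rep_def by (rule someI)
  then have r': "rep c \<in> Korbit (fst c) g" using g(1) by (metis snd_conv)
  then show "rep c \<in> Gr (fst c)" using Korbit_Gr[OF g(2)] by blast
  show "snd c = Korbit (fst c) (rep c)" using Korbit_mem_eq[OF r'] g(1) by (metis snd_conv)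
qed

lemma AN_eq:
  assumes "c \<in> classes"
  shows "AN N c x = of_nat (card {\<iota>\<in>Inj (fst c) N. pushg (fst c) \<iota> (rep c) = x})"
proof (cases "fst c \<le> N")
  case True
  have "AN N c x = (1 / of_nat (fact (N - fst c))) * of_nat (card {t\<in>Sym N. conjK t (rep c) = x})"
    unfolding AN_def using True by (simp add: sum_indicator_card finite_Sym)
  also have "\<dots> = (1 / of_nat (fact (N - fst c))) * (of_nat (fact (N - fst c)) *
       of_nat (card {\<iota>\<in>Inj (fst c) N. pushg (fst c) \<iota> (rep c) = x}))"
    using count_conj[OF True rep_props(2)[OF assms]] by simp
  also have "\<dots> = of_nat (card {\<iota>\<in>Inj (fst c) N. pushg (fst c) \<iota> (rep c) = x})"
    by simp
  finally show ?thesis .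
next
  case False
  then have "Inj (fst c) N = {}" using Inj_le by fastforce
  then show ?thesis unfolding AN_def using False by simp
qed

definition enum :: "nat set \<Rightarrow> perm" where
  "enum U = (SOME f. bij_betw f {1..card U} U)"

lemma enum_bij: "finite U \<Longrightarrow> bij_betw (enum U) {1..card U} U"
  unfolding enum_def by (rule someI_ex[OF ex_bij_betw_nat_finite_1])

definition Uimg :: "nat \<Rightarrow> nat \<Rightarrow> perm \<times> perm \<Rightarrow> nat set" where
  "Uimg j k \<iota> = fst \<iota> ` {1..j} \<union> snd \<iota> ` {1..k}"

definition Cov :: "nat \<Rightarrow> nat \<Rightarrow> nat \<Rightarrow> (perm \<times> perm) set" where
  "Cov j k l = {\<alpha> \<in> Inj j l \<times> Inj k l. Uimg j k \<alpha> = {1..l}}"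

definition Phi :: "nat \<Rightarrow> nat \<Rightarrow> nat set \<Rightarrow> perm \<times> perm \<Rightarrow> perm \<times> perm" where
  "Phi j k U \<alpha> = (restrict (enum U \<circ> fst \<alpha>) {1..j}, restrict (enum U \<circ> snd \<alpha>) {1..k})"

definition Psi :: "nat \<Rightarrow> nat \<Rightarrow> nat set \<Rightarrow> perm \<times> perm \<Rightarrow> perm \<times> perm" where
  "Psi j k U \<iota> = (restrict (inv_into {1..card U} (enum U) \<circ> fst \<iota>) {1..j},
                   restrict (inv_into {1..card U} (enum U) \<circ> snd \<iota>) {1..k})"

lemma finite_Cov: "finite (Cov j k l)"
proof -
  have "Cov j k l \<subseteq> Inj j l \<times> Inj k l" unfolding Cov_def by blast
  moreover have "finite (Inj j l \<times> Inj k l)" using finite_Inj by simp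
  ultimately show ?thesis by (rule finite_subset)
qed

lemma comp_Inj:
  assumes "\<alpha> \<in> Inj j l" "inj_on e {1..l}" "e ` {1..l} \<subseteq> {1..N}"
  shows "restrict (e \<circ> \<alpha>) {1..j} \<in> Inj j N"
proof -
  have a1: "inj_on \<alpha> {1..j}" by (rule InjD(1)[OF assms(1)])
  have a2: "\<alpha> ` {1..j} \<subseteq> {1..l}" by (rule InjD(2)[OF assms(1)])
  have "inj_on e (\<alpha> ` {1..j})" using assms(2) a2 by (rule inj_on_subset)
  then have "inj_on (e \<circ> \<alpha>) {1..j}" using a1 by (intro comp_inj_on)
  moreover have "(e \<circ> \<alpha>) ` {1..j} \<subseteq> {1..N}" using a2 assms(3) by (auto simp: image_comp[symmetric])
  ultimately show ?thesis by (rule restrict_Inj)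
qed

lemma Phi_props:
  assumes U: "U \<subseteq> {1..N}" and \<alpha>: "\<alpha> \<in> Cov j k (card U)"
  shows "Phi j k U \<alpha> \<in> Inj j N \<times> Inj k N" "Uimg j k (Phi j k U \<alpha>) = U"
proof -
  have fU: "finite U" using U finite_subset by blast
  have b: "bij_betw (enum U) {1..card U} U" using fU by (rule enum_bij)
  have ie: "inj_on (enum U) {1..card U}" using b by (simp add: bij_betw_def)
  have im: "enum U ` {1..card U} = U" using b by (simp add: bij_betw_def)
  have a1: "fst \<alpha> \<in> Inj j (card U)" and a2: "snd \<alpha> \<in> Inj k (card U)"
    and cov: "Uimg j k \<alpha> = {1..card U}" using \<alpha> unfolding Cov_def by auto
  have eS: "enum U ` {1..card U} \<subseteq> {1..N}" using im U by simp
  have "restrict (enum U \<circ> fst \<alpha>) {1..j} \<in> Inj j N" by (rule comp_Inj[OF a1 ie eS])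
  moreover have "restrict (enum U \<circ> snd \<alpha>) {1..k} \<in> Inj k N" by (rule comp_Inj[OF a2 ie eS])
  ultimately show "Phi j k U \<alpha> \<in> Inj j N \<times> Inj k N" unfolding Phi_def by simp
  have "Uimg j k (Phi j k U \<alpha>) = enum U ` (Uimg j k \<alpha>)"
    unfolding Uimg_def Phi_def by (simp add: image_Un image_comp)
  also have "\<dots> = U" using cov im by simp
  finally show "Uimg j k (Phi j k U \<alpha>) = U" .
qed

lemma Phi_inj:
  assumes U: "finite U"
  shows "inj_on (Phi j k U) (Cov j k (card U))"
proof (rule inj_onI)
  fix \<alpha> \<beta> assume a: "\<alpha> \<in> Cov j k (card U)" and b: "\<beta> \<in> Cov j k (card U)" and e: "Phi j k U \<alpha> = Phi j k U \<beta>"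
  have ie: "inj_on (enum U) {1..card U}" using enum_bij[OF U] by (simp add: bij_betw_def)
  have a1: "fst \<alpha> \<in> Inj j (card U)" and a2: "snd \<alpha> \<in> Inj k (card U)" using a unfolding Cov_def by auto
  have b1: "fst \<beta> \<in> Inj j (card U)" and b2: "snd \<beta> \<in> Inj k (card U)" using b unfolding Cov_def by auto
  have e1: "restrict (enum U \<circ> fst \<alpha>) {1..j} = restrict (enum U \<circ> fst \<beta>) {1..j}"
    using e unfolding Phi_def by simp
  have e2: "restrict (enum U \<circ> snd \<alpha>) {1..k} = restrict (enum U \<circ> snd \<beta>) {1..k}"
    using e unfolding Phi_def by simp
  have "fst \<alpha> = fst \<beta>"
  proof (rule Inj_eqI[OF a1 b1])
    fix i assume i: "i \<in> {1..j}"
    have "enum U (fst \<alpha> i) = enum U (fst \<beta> i)" using fun_cong[OF e1, of i] i by simp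
    moreover have "fst \<alpha> i \<in> {1..card U}" using InjD(2)[OF a1] i by blast
    moreover have "fst \<beta> i \<in> {1..card U}" using InjD(2)[OF b1] i by blast
    ultimately show "fst \<alpha> i = fst \<beta> i" using ie by (simp add: inj_on_eq_iff)
  qed
  moreover have "snd \<alpha> = snd \<beta>"
  proof (rule Inj_eqI[OF a2 b2])
    fix i assume i: "i \<in> {1..k}"
    have "enum U (snd \<alpha> i) = enum U (snd \<beta> i)" using fun_cong[OF e2, of i] i by simp
    moreover have "snd \<alpha> i \<in> {1..card U}" using InjD(2)[OF a2] i by blast
    moreover have "snd \<beta> i \<in> {1..card U}" using InjD(2)[OF b2] i by blast
    ultimately show "snd \<alpha> i = snd \<beta> i" using ie by (simp add: inj_on_eq_iff)
  qed
  ultimately show "\<alpha> = \<beta>" by (rule prod_eqI)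
qed

lemma Psi_props:
  assumes \<iota>: "\<iota> \<in> Inj j N \<times> Inj k N"
  defines "U \<equiv> Uimg j k \<iota>"
  shows "U \<subseteq> {1..N}" "Psi j k U \<iota> \<in> Cov j k (card U)" "Phi j k U (Psi j k U \<iota>) = \<iota>"
proof -
  have i1: "fst \<iota> \<in> Inj j N" and i2: "snd \<iota> \<in> Inj k N" using \<iota> by auto
  show UN: "U \<subseteq> {1..N}" unfolding U_def Uimg_def using InjD(2)[OF i1] InjD(2)[OF i2] by blast
  have fU: "finite U" using UN finite_subset by blast
  let ?l = "card U" and ?e = "enum U"
  let ?h = "inv_into {1..?l} ?e"
  have b: "bij_betw ?e {1..?l} U" using fU by (rule enum_bij)
  have bh: "bij_betw ?h U {1..?l}" using b by (rule bij_betw_inv_into)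
  have ih: "inj_on ?h U" using bh by (simp add: bij_betw_def)
  have imh: "?h ` U = {1..?l}" using bh by (simp add: bij_betw_def)
  have ehh: "\<And>y. y \<in> U \<Longrightarrow> ?e (?h y) = y" using b by (simp add: bij_betw_inv_into_right)
  have s1: "fst \<iota> ` {1..j} \<subseteq> U" unfolding U_def Uimg_def by blast
  have s2: "snd \<iota> ` {1..k} \<subseteq> U" unfolding U_def Uimg_def by blast
  have hS: "?h ` U \<subseteq> {1..?l}" using imh by simp
  have p1: "restrict (?h \<circ> fst \<iota>) {1..j} \<in> Inj j ?l"
  proof (rule restrict_Inj)
    show "inj_on (?h \<circ> fst \<iota>) {1..j}"
      using InjD(1)[OF i1] inj_on_subset[OF ih s1] by (rule comp_inj_on)
    show "(?h \<circ> fst \<iota>) ` {1..j} \<subseteq> {1..?l}" using s1 hS by (auto simp: image_comp[symmetric])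
  qed
  have p2: "restrict (?h \<circ> snd \<iota>) {1..k} \<in> Inj k ?l"
  proof (rule restrict_Inj)
    show "inj_on (?h \<circ> snd \<iota>) {1..k}"
      using InjD(1)[OF i2] inj_on_subset[OF ih s2] by (rule comp_inj_on)
    show "(?h \<circ> snd \<iota>) ` {1..k} \<subseteq> {1..?l}" using s2 hS by (auto simp: image_comp[symmetric])
  qed
  have "Uimg j k (Psi j k U \<iota>) = ?h ` U"
    unfolding Psi_def Uimg_def U_def by (simp add: image_Un image_comp)
  then have "Uimg j k (Psi j k U \<iota>) = {1..?l}" using imh by simp
  then show "Psi j k U \<iota> \<in> Cov j k ?l" unfolding Cov_def Psi_def using p1 p2 by simp
  have q1: "restrict (?e \<circ> restrict (?h \<circ> fst \<iota>) {1..j}) {1..j} = fst \<iota>"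
  proof (rule ext)
    fix i show "restrict (?e \<circ> restrict (?h \<circ> fst \<iota>) {1..j}) {1..j} i = fst \<iota> i"
    proof (cases "i \<in> {1..j}")
      case True
      then have "fst \<iota> i \<in> U" using s1 by blast
      then show ?thesis using True ehh by simp
    next
      case False
      then show ?thesis by (simp only: restrict_def if_not_P[OF False] InjD(3)[OF i1 False] if_False)
    qed
  qed
  have q2: "restrict (?e \<circ> restrict (?h \<circ> snd \<iota>) {1..k}) {1..k} = snd \<iota>"
  proof (rule ext)
    fix i show "restrict (?e \<circ> restrict (?h \<circ> snd \<iota>) {1..k}) {1..k} i = snd \<iota> i"
    proof (cases "i \<in> {1..k}")
      case True
      then have "snd \<iota> i \<in> U" using s2 by blast
      then show ?thesis using True ehh by simp
    next
      case False
      then show ?thesis by (simp only: restrict_def if_not_P[OF False] InjD(3)[OF i2 False] if_False)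
    qed
  qed
  show "Phi j k U (Psi j k U \<iota>) = \<iota>" unfolding Phi_def Psi_def using q1 q2 by simp
qed

lemma decomp:
  "card {\<iota> \<in> Inj j N \<times> Inj k N. Q \<iota>} =
   (\<Sum>U\<in>Pow {1..N}. card {\<alpha> \<in> Cov j k (card U). Q (Phi j k U \<alpha>)})"
proof -
  let ?A = "\<lambda>U. Phi j k U ` {\<alpha> \<in> Cov j k (card U). Q (Phi j k U \<alpha>)}"
  have eq: "{\<iota> \<in> Inj j N \<times> Inj k N. Q \<iota>} = (\<Union>U\<in>Pow {1..N}. ?A U)"
  proof
    show "{\<iota> \<in> Inj j N \<times> Inj k N. Q \<iota>} \<subseteq> (\<Union>U\<in>Pow {1..N}. ?A U)"
    proof
      fix \<iota> assume a: "\<iota> \<in> {\<iota> \<in> Inj j N \<times> Inj k N. Q \<iota>}"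
      then have i: "\<iota> \<in> Inj j N \<times> Inj k N" and q: "Q \<iota>" by auto
      note P = Psi_props[OF i]
      let ?U = "Uimg j k \<iota>"
      have "Psi j k ?U \<iota> \<in> {\<alpha> \<in> Cov j k (card ?U). Q (Phi j k ?U \<alpha>)}"
        using P(2) P(3) q by simp
      then have "\<iota> \<in> ?A ?U" using P(3) by (metis (no_types, lifting) image_eqI)
      moreover have "?U \<in> Pow {1..N}" using P(1) by simp
      ultimately show "\<iota> \<in> (\<Union>U\<in>Pow {1..N}. ?A U)" by blast
    qed
    show "(\<Union>U\<in>Pow {1..N}. ?A U) \<subseteq> {\<iota> \<in> Inj j N \<times> Inj k N. Q \<iota>}"
    proof
      fix \<iota> assume "\<iota> \<in> (\<Union>U\<in>Pow {1..N}. ?A U)"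
      then obtain U \<alpha> where U: "U \<subseteq> {1..N}" and a: "\<alpha> \<in> Cov j k (card U)" and q: "Q (Phi j k U \<alpha>)"
        and e: "\<iota> = Phi j k U \<alpha>" by blast
      show "\<iota> \<in> {\<iota> \<in> Inj j N \<times> Inj k N. Q \<iota>}" using Phi_props(1)[OF U a] q e by simp
    qed
  qed
  have "card (\<Union>U\<in>Pow {1..N}. ?A U) = (\<Sum>U\<in>Pow {1..N}. card (?A U))"
  proof (rule card_UN_disjoint)
    show "finite (Pow {1..N})" by simp
    show "\<forall>U\<in>Pow {1..N}. finite (?A U)" using finite_Cov by simp
    show "\<forall>U\<in>Pow {1..N}. \<forall>V\<in>Pow {1..N}. U \<noteq> V \<longrightarrow> ?A U \<inter> ?A V = {}"
    proof (intro ballI impI)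
      fix U V assume U: "U \<in> Pow {1..N}" and V: "V \<in> Pow {1..N}" and ne: "U \<noteq> V"
      show "?A U \<inter> ?A V = {}"
      proof (rule ccontr)
        assume "?A U \<inter> ?A V \<noteq> {}"
        then obtain \<alpha> \<beta> where a: "\<alpha> \<in> Cov j k (card U)" and b: "\<beta> \<in> Cov j k (card V)"
          and e: "Phi j k U \<alpha> = Phi j k V \<beta>" by blast
        have "U = Uimg j k (Phi j k U \<alpha>)" using Phi_props(2)[OF _ a] U by simp
        also have "\<dots> = Uimg j k (Phi j k V \<beta>)" using e by simp
        also have "\<dots> = V" using Phi_props(2)[OF _ b] V by simp
        finally show False using ne by simp
      qed
    qed
  qed
  moreover have "\<And>U. U \<in> Pow {1..N} \<Longrightarrow> card (?A U) = card {\<alpha> \<in> Cov j k (card U). Q (Phi j k U \<alpha>)}"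
  proof -
    fix U assume U: "U \<in> Pow {1..N}"
    have "finite U" using U finite_subset by auto
    then have "inj_on (Phi j k U) {\<alpha> \<in> Cov j k (card U). Q (Phi j k U \<alpha>)}"
      by (rule inj_on_subset[OF Phi_inj]) blast
    then show "card (?A U) = card {\<alpha> \<in> Cov j k (card U). Q (Phi j k U \<alpha>)}" by (rule card_image)
  qed
  ultimately show ?thesis using eq by simp
qed

definition Comp :: "nat \<Rightarrow> nat \<Rightarrow> perm \<Rightarrow> perm \<times> perm \<Rightarrow> perm \<times> perm" where
  "Comp j k e \<alpha> = (restrict (e \<circ> fst \<alpha>) {1..j}, restrict (e \<circ> snd \<alpha>) {1..k})"

definition Pr :: "nat \<Rightarrow> nat \<Rightarrow> gel \<Rightarrow> gel \<Rightarrow> perm \<times> perm \<Rightarrow> gel" where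
  "Pr j k g g' \<alpha> = gmul (pushg j (fst \<alpha>) g) (pushg k (snd \<alpha>) g')"

lemma Phi_Comp: "Phi j k U = Comp j k (enum U)"
  unfolding Phi_def Comp_def by (rule ext) simp

lemma CovD: assumes "\<alpha> \<in> Cov j k l"
  shows "fst \<alpha> \<in> Inj j l" "snd \<alpha> \<in> Inj k l" "Uimg j k \<alpha> = {1..l}"
  using assms unfolding Cov_def by auto

lemma Cov_sub: "\<alpha> \<in> Cov j k l \<Longrightarrow> \<alpha> \<in> Inj j l \<times> Inj k l"
  unfolding Cov_def by blast

lemma Pr_Gr: "\<alpha> \<in> Inj j l \<times> Inj k l \<Longrightarrow> g \<in> Gr j \<Longrightarrow> g' \<in> Gr k \<Longrightarrow> Pr j k g g' \<alpha> \<in> Gr l"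
  unfolding Pr_def by (intro gmul_Gr pushg_Gr) auto

lemma pushg_restrict_comp:
  assumes "\<alpha> \<in> Inj j l" "inj_on e {1..l}" "g \<in> Gr j"
  shows "pushg j (restrict (e \<circ> \<alpha>) {1..j}) g = pushg l e (pushg j \<alpha> g)"
proof -
  have a2: "\<alpha> ` {1..j} \<subseteq> {1..l}" by (rule InjD(2)[OF assms(1)])
  have "inj_on e (\<alpha> ` {1..j})" using assms(2) a2 by (rule inj_on_subset)
  then have ie: "inj_on (e \<circ> \<alpha>) {1..j}" using InjD(1)[OF assms(1)] by (intro comp_inj_on)
  have "pushg j (e \<circ> \<alpha>) g = pushg j (restrict (e \<circ> \<alpha>) {1..j}) g"
    by (rule pushg_cong[OF _ ie assms(3)]) simp
  then show ?thesis using pushg_comp[OF assms] by simp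
qed

lemma Pr_Comp:
  assumes "\<alpha> \<in> Inj j l \<times> Inj k l" "inj_on e {1..l}" "g \<in> Gr j" "g' \<in> Gr k"
  shows "Pr j k g g' (Comp j k e \<alpha>) = pushg l e (Pr j k g g' \<alpha>)"
proof -
  have a1: "fst \<alpha> \<in> Inj j l" and a2: "snd \<alpha> \<in> Inj k l" using assms(1) by auto
  have "Pr j k g g' (Comp j k e \<alpha>) = gmul (pushg l e (pushg j (fst \<alpha>) g)) (pushg l e (pushg k (snd \<alpha>) g'))"
    unfolding Pr_def Comp_def fst_conv snd_conv
    by (simp only: pushg_restrict_comp[OF a1 assms(2,3)] pushg_restrict_comp[OF a2 assms(2,4)])
  also have "\<dots> = pushg l e (Pr j k g g' \<alpha>)"
    unfolding Pr_def
    by (rule pushg_gmul[symmetric, OF assms(2) pushg_Gr[OF a1 assms(3)] pushg_Gr[OF a2 assms(4)]])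
  finally show ?thesis .
qed

lemma Comp_inj_Cov:
  assumes "inj_on e {1..l}"
  shows "inj_on (Comp j k e) (Inj j l \<times> Inj k l)"
proof (rule inj_onI)
  fix \<alpha> \<beta> assume a: "\<alpha> \<in> Inj j l \<times> Inj k l" and b: "\<beta> \<in> Inj j l \<times> Inj k l"
    and e: "Comp j k e \<alpha> = Comp j k e \<beta>"
  have a1: "fst \<alpha> \<in> Inj j l" and a2: "snd \<alpha> \<in> Inj k l" using a by auto
  have b1: "fst \<beta> \<in> Inj j l" and b2: "snd \<beta> \<in> Inj k l" using b by auto
  have e1: "restrict (e \<circ> fst \<alpha>) {1..j} = restrict (e \<circ> fst \<beta>) {1..j}"
    using e unfolding Comp_def by simp
  have e2: "restrict (e \<circ> snd \<alpha>) {1..k} = restrict (e \<circ> snd \<beta>) {1..k}"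
    using e unfolding Comp_def by simp
  have "fst \<alpha> = fst \<beta>"
  proof (rule Inj_eqI[OF a1 b1])
    fix i assume i: "i \<in> {1..j}"
    have "e (fst \<alpha> i) = e (fst \<beta> i)" using fun_cong[OF e1, of i] i by simp
    moreover have "fst \<alpha> i \<in> {1..l}" using InjD(2)[OF a1] i by blast
    moreover have "fst \<beta> i \<in> {1..l}" using InjD(2)[OF b1] i by blast
    ultimately show "fst \<alpha> i = fst \<beta> i" using assms by (simp add: inj_on_eq_iff)
  qed
  moreover have "snd \<alpha> = snd \<beta>"
  proof (rule Inj_eqI[OF a2 b2])
    fix i assume i: "i \<in> {1..k}"
    have "e (snd \<alpha> i) = e (snd \<beta> i)" using fun_cong[OF e2, of i] i by simp
    moreover have "snd \<alpha> i \<in> {1..l}" using InjD(2)[OF a2] i by blast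
    moreover have "snd \<beta> i \<in> {1..l}" using InjD(2)[OF b2] i by blast
    ultimately show "snd \<alpha> i = snd \<beta> i" using assms by (simp add: inj_on_eq_iff)
  qed
  ultimately show "\<alpha> = \<beta>" by (rule prod_eqI)
qed

lemma inv_Sym_props:
  assumes "t \<in> Sym l"
  shows "inj_on (inv t) {1..l}" "inv t ` {1..l} = {1..l}"
proof -
  have it: "inv t permutes {1..l}" using Sym_inv[OF assms] by (simp add: Sym_def)
  show "inj_on (inv t) {1..l}" using it by (rule permutes_inj_on)
  show "inv t ` {1..l} = {1..l}" using it by (rule permutes_image)
qed

lemma Comp_Cov:
  assumes "t \<in> Sym l" "\<alpha> \<in> Cov j k l"
  shows "Comp j k (inv t) \<alpha> \<in> Cov j k l"
proof -
  note I = inv_Sym_props[OF assms(1)]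
  have sub: "inv t ` {1..l} \<subseteq> {1..l}" using I(2) by simp
  have "restrict (inv t \<circ> fst \<alpha>) {1..j} \<in> Inj j l" by (rule comp_Inj[OF CovD(1)[OF assms(2)] I(1) sub])
  moreover have "restrict (inv t \<circ> snd \<alpha>) {1..k} \<in> Inj k l" by (rule comp_Inj[OF CovD(2)[OF assms(2)] I(1) sub])
  moreover have "Uimg j k (Comp j k (inv t) \<alpha>) = inv t ` Uimg j k \<alpha>"
    unfolding Uimg_def Comp_def by (simp add: image_Un image_comp)
  moreover have "inv t ` Uimg j k \<alpha> = {1..l}" using CovD(3)[OF assms(2)] I(2) by simp
  ultimately show ?thesis unfolding Cov_def Comp_def by simp
qed

lemma Pr_act:
  assumes "t \<in> Sym l" "\<alpha> \<in> Cov j k l" "g \<in> Gr j" "g' \<in> Gr k"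
  shows "Pr j k g g' (Comp j k (inv t) \<alpha>) = conjK t (Pr j k g g' \<alpha>)"
proof -
  have a: "\<alpha> \<in> Inj j l \<times> Inj k l" using assms(2) by (rule Cov_sub)
  have "Pr j k g g' (Comp j k (inv t) \<alpha>) = pushg l (inv t) (Pr j k g g' \<alpha>)"
    by (rule Pr_Comp[OF a inv_Sym_props(1)[OF assms(1)] assms(3,4)])
  also have "\<dots> = conjK t (Pr j k g g' \<alpha>)"
    by (rule conjK_pushg[symmetric, OF assms(1) order.refl Pr_Gr[OF a assms(3,4)]])
  finally show ?thesis .
qed

definition ncnt :: "nat \<Rightarrow> nat \<Rightarrow> nat \<Rightarrow> gel \<Rightarrow> gel \<Rightarrow> gel \<Rightarrow> nat" where
  "ncnt j k l g g' y = card {\<alpha> \<in> Cov j k l. Pr j k g g' \<alpha> = y}"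

lemma ncnt_le:
  assumes t: "t \<in> Sym l" and g: "g \<in> Gr j" "g' \<in> Gr k"
  shows "ncnt j k l g g' y \<le> ncnt j k l g g' (conjK t y)"
  unfolding ncnt_def
proof (rule card_inj_on_le[of "Comp j k (inv t)"])
  show "inj_on (Comp j k (inv t)) {\<alpha> \<in> Cov j k l. Pr j k g g' \<alpha> = y}"
    by (rule inj_on_subset[OF Comp_inj_Cov[OF inv_Sym_props(1)[OF t]]]) (auto simp: Cov_def)
  show "Comp j k (inv t) ` {\<alpha> \<in> Cov j k l. Pr j k g g' \<alpha> = y} \<subseteq> {\<alpha> \<in> Cov j k l. Pr j k g g' \<alpha> = conjK t y}"
  proof
    fix \<beta> assume "\<beta> \<in> Comp j k (inv t) ` {\<alpha> \<in> Cov j k l. Pr j k g g' \<alpha> = y}"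
    then obtain \<alpha> where a: "\<alpha> \<in> Cov j k l" "Pr j k g g' \<alpha> = y" "\<beta> = Comp j k (inv t) \<alpha>" by blast
    have "\<beta> \<in> Cov j k l" using Comp_Cov[OF t a(1)] a(3) by simp
    moreover have "Pr j k g g' \<beta> = conjK t y" using Pr_act[OF t a(1) g] a by simp
    ultimately show "\<beta> \<in> {\<alpha> \<in> Cov j k l. Pr j k g g' \<alpha> = conjK t y}" by simp
  qed
  show "finite {\<alpha> \<in> Cov j k l. Pr j k g g' \<alpha> = conjK t y}" using finite_Cov by simp
qed

lemma ncnt_inv:
  assumes t: "t \<in> Sym l" and g: "g \<in> Gr j" "g' \<in> Gr k"
  shows "ncnt j k l g g' (conjK t y) = ncnt j k l g g' y"
proof (rule antisym)
  show "ncnt j k l g g' y \<le> ncnt j k l g g' (conjK t y)" by (rule ncnt_le[OF t g])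
  have "ncnt j k l g g' (conjK t y) \<le> ncnt j k l g g' (conjK (inv t) (conjK t y))"
    by (rule ncnt_le[OF Sym_inv[OF t] g])
  also have "conjK (inv t) (conjK t y) = y" by (rule conjK_inv_cancel[OF Sym_bij[OF t]])
  finally show "ncnt j k l g g' (conjK t y) \<le> ncnt j k l g g' y" .
qed

definition Stab :: "nat \<Rightarrow> gel \<Rightarrow> perm set" where
  "Stab l g = {t \<in> Sym l. conjK t g = g}"

lemma Stab_id: "id \<in> Stab l g"
  unfolding Stab_def using id_Sym by simp

lemma Stab_comp: "t \<in> Stab l g \<Longrightarrow> s \<in> Stab l g \<Longrightarrow> t \<circ> s \<in> Stab l g"
  unfolding Stab_def using Sym_comp conjK_comp Sym_bij by (metis (mono_tags, lifting) mem_Collect_eq)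

lemma Stab_inv: "t \<in> Stab l g \<Longrightarrow> inv t \<in> Stab l g"
proof -
  assume t: "t \<in> Stab l g"
  then have ts: "t \<in> Sym l" and e: "conjK t g = g" unfolding Stab_def by auto
  have "conjK (inv t) g = conjK (inv t) (conjK t g)" using e by simp
  also have "\<dots> = g" by (rule conjK_inv_cancel[OF Sym_bij[OF ts]])
  finally show ?thesis unfolding Stab_def using Sym_inv[OF ts] by simp
qed

lemma finite_Stab: "finite (Stab l g)"
  unfolding Stab_def using finite_Sym by simp

lemma Inj_restrict_self: "\<alpha> \<in> Inj j l \<Longrightarrow> restrict \<alpha> {1..j} = \<alpha>"
proof (rule ext)
  fix i assume a: "\<alpha> \<in> Inj j l"
  show "restrict \<alpha> {1..j} i = \<alpha> i"
  proof (cases "i \<in> {1..j}")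
    case True then show ?thesis by simp
  next
    case False then show ?thesis by (simp only: restrict_def if_not_P[OF False] InjD(3)[OF a False] if_False)
  qed
qed

lemma Comp_id: "\<alpha> \<in> Inj j l \<times> Inj k l \<Longrightarrow> Comp j k (inv id) \<alpha> = \<alpha>"
proof -
  assume a: "\<alpha> \<in> Inj j l \<times> Inj k l"
  have a1: "fst \<alpha> \<in> Inj j l" using a by (simp add: mem_Times_iff)
  have a2: "snd \<alpha> \<in> Inj k l" using a by (simp add: mem_Times_iff)
  have "restrict (id \<circ> fst \<alpha>) {1..j} = fst \<alpha>" unfolding id_comp by (rule Inj_restrict_self[OF a1])
  moreover have "restrict (id \<circ> snd \<alpha>) {1..k} = snd \<alpha>" unfolding id_comp by (rule Inj_restrict_self[OF a2])
  ultimately show ?thesis unfolding Comp_def by (simp add: inv_id)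
qed

lemma Comp_Comp:
  assumes "t \<in> Sym l" "s \<in> Sym l"
  shows "Comp j k (inv s) (Comp j k (inv t) \<alpha>) = Comp j k (inv (t \<circ> s)) \<alpha>"
proof -
  have e: "inv (t \<circ> s) = inv s \<circ> inv t" using Sym_bij[OF assms(1)] Sym_bij[OF assms(2)] by (rule o_inv_distrib)
  have "restrict (inv s \<circ> restrict (inv t \<circ> fst \<alpha>) {1..j}) {1..j} = restrict (inv (t \<circ> s) \<circ> fst \<alpha>) {1..j}"
    unfolding e by (rule ext) (simp add: restrict_def)
  moreover have "restrict (inv s \<circ> restrict (inv t \<circ> snd \<alpha>) {1..k}) {1..k} = restrict (inv (t \<circ> s) \<circ> snd \<alpha>) {1..k}"
    unfolding e by (rule ext) (simp add: restrict_def)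
  ultimately show ?thesis unfolding Comp_def by simp
qed

lemma Comp_inj_t:
  assumes a: "\<alpha> \<in> Cov j k l"
  shows "inj_on (\<lambda>t. Comp j k (inv t) \<alpha>) (Sym l)"
proof (rule inj_onI)
  fix t s assume t: "t \<in> Sym l" and s: "s \<in> Sym l" and e: "Comp j k (inv t) \<alpha> = Comp j k (inv s) \<alpha>"
  have e1: "restrict (inv t \<circ> fst \<alpha>) {1..j} = restrict (inv s \<circ> fst \<alpha>) {1..j}"
    using e unfolding Comp_def by simp
  have e2: "restrict (inv t \<circ> snd \<alpha>) {1..k} = restrict (inv s \<circ> snd \<alpha>) {1..k}"
    using e unfolding Comp_def by simp
  have eq: "\<And>x. x \<in> Uimg j k \<alpha> \<Longrightarrow> inv t x = inv s x"
  proof -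
    fix x assume "x \<in> Uimg j k \<alpha>"
    then consider i where "i \<in> {1..j}" "x = fst \<alpha> i" | i where "i \<in> {1..k}" "x = snd \<alpha> i"
      unfolding Uimg_def by blast
    then show "inv t x = inv s x"
    proof cases
      case 1 then show ?thesis using fun_cong[OF e1, of i] by simp
    next
      case 2 then show ?thesis using fun_cong[OF e2, of i] by simp
    qed
  qed
  have pt: "inv t permutes {1..l}" using Sym_inv[OF t] by (simp add: Sym_def)
  have ps: "inv s permutes {1..l}" using Sym_inv[OF s] by (simp add: Sym_def)
  have "inv t = inv s"
  proof (rule ext)
    fix x show "inv t x = inv s x"
    proof (cases "x \<in> {1..l}")
      case True then show ?thesis using eq CovD(3)[OF a] by simp
    next
      case False then show ?thesis using permutes_not_in[OF pt False] permutes_not_in[OF ps False] by simp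
    qed
  qed
  then show "t = s" using Sym_bij[OF t] Sym_bij[OF s] by (metis inv_inv_eq)
qed

definition orb :: "nat \<Rightarrow> nat \<Rightarrow> nat \<Rightarrow> gel \<Rightarrow> perm \<times> perm \<Rightarrow> (perm \<times> perm) set" where
  "orb j k l g \<alpha> = (\<lambda>t. Comp j k (inv t) \<alpha>) ` Stab l g"

lemma Stab_Sym: "Stab l g \<subseteq> Sym l" unfolding Stab_def by blast

lemma orb_member:
  assumes t: "t \<in> Stab l g"
  shows "orb j k l g (Comp j k (inv t) \<alpha>) = orb j k l g \<alpha>"
proof
  have tS: "t \<in> Sym l" using t Stab_Sym by blast
  show "orb j k l g (Comp j k (inv t) \<alpha>) \<subseteq> orb j k l g \<alpha>"
  proof
    fix \<gamma> assume "\<gamma> \<in> orb j k l g (Comp j k (inv t) \<alpha>)"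
    then obtain u where u: "u \<in> Stab l g" "\<gamma> = Comp j k (inv u) (Comp j k (inv t) \<alpha>)" unfolding orb_def by blast
    have "\<gamma> = Comp j k (inv (t \<circ> u)) \<alpha>" using u(2) Comp_Comp[OF tS, of u] Stab_Sym u(1) by blast
    moreover have "t \<circ> u \<in> Stab l g" using t u(1) by (rule Stab_comp)
    ultimately show "\<gamma> \<in> orb j k l g \<alpha>" unfolding orb_def by blast
  qed
  show "orb j k l g \<alpha> \<subseteq> orb j k l g (Comp j k (inv t) \<alpha>)"
  proof
    fix \<gamma> assume "\<gamma> \<in> orb j k l g \<alpha>"
    then obtain v where v: "v \<in> Stab l g" "\<gamma> = Comp j k (inv v) \<alpha>" unfolding orb_def by blast
    have u: "inv t \<circ> v \<in> Stab l g" using Stab_inv[OF t] v(1) by (rule Stab_comp)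
    have uS: "inv t \<circ> v \<in> Sym l" using u Stab_Sym by blast
    have "t \<circ> (inv t \<circ> v) = v" using Sym_bij[OF tS] by (rule bij_comp_inv_cancel)
    then have "Comp j k (inv (inv t \<circ> v)) (Comp j k (inv t) \<alpha>) = \<gamma>"
      using Comp_Comp[OF tS uS, of j k \<alpha>] v(2) by simp
    then show "\<gamma> \<in> orb j k l g (Comp j k (inv t) \<alpha>)" using u unfolding orb_def by blast
  qed
qed

lemma Stab_dvd_ncnt:
  assumes g: "g \<in> Gr j" "g' \<in> Gr k" and y: "y \<in> Gr l"
  shows "card (Stab l y) dvd ncnt j k l g g' y"
proof -
  let ?X = "{\<alpha> \<in> Cov j k l. Pr j k g g' \<alpha> = y}"
  let ?C = "orb j k l y ` ?X"
  have sub: "\<And>\<alpha> t. \<alpha> \<in> ?X \<Longrightarrow> t \<in> Stab l y \<Longrightarrow> Comp j k (inv t) \<alpha> \<in> ?X"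
  proof -
    fix \<alpha> t assume a: "\<alpha> \<in> ?X" and t: "t \<in> Stab l y"
    have tS: "t \<in> Sym l" and ty: "conjK t y = y" using t unfolding Stab_def by auto
    have "Pr j k g g' (Comp j k (inv t) \<alpha>) = conjK t (Pr j k g g' \<alpha>)"
      using a by (intro Pr_act[OF tS _ g]) simp
    also have "\<dots> = y" using a ty by simp
    finally show "Comp j k (inv t) \<alpha> \<in> ?X" using Comp_Cov[OF tS] a by simp
  qed
  have U: "\<Union>?C = ?X"
  proof
    show "\<Union>?C \<subseteq> ?X" unfolding orb_def using sub by blast
    show "?X \<subseteq> \<Union>?C"
    proof
      fix \<alpha> assume a: "\<alpha> \<in> ?X"
      have "\<alpha> \<in> Cov j k l" using a by simp
      then have "Comp j k (inv id) \<alpha> = \<alpha>" by (rule Comp_id[OF Cov_sub])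
      then have "\<alpha> = Comp j k (inv id) \<alpha>" by simp
      then have "\<alpha> \<in> orb j k l y \<alpha>" unfolding orb_def using Stab_id by blast
      then show "\<alpha> \<in> \<Union>?C" using a by blast
    qed
  qed
  have "card (Stab l y) dvd card (\<Union>?C)"
  proof (rule dvd_partition)
    show "finite (\<Union>?C)" unfolding U using finite_Cov by simp
    show "\<forall>c\<in>?C. card (Stab l y) dvd card c"
    proof
      fix c assume "c \<in> ?C"
      then obtain \<alpha> where a: "\<alpha> \<in> ?X" "c = orb j k l y \<alpha>" by blast
      have aC: "\<alpha> \<in> Cov j k l" using a(1) by simp
      have "inj_on (\<lambda>t. Comp j k (inv t) \<alpha>) (Stab l y)"
        by (rule inj_on_subset[OF Comp_inj_t[OF aC] Stab_Sym])
      then have "card c = card (Stab l y)" unfolding a(2) orb_def by (rule card_image)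
      then show "card (Stab l y) dvd card c" by simp
    qed
    show "\<forall>c1\<in>?C. \<forall>c2\<in>?C. c1 \<noteq> c2 \<longrightarrow> c1 \<inter> c2 = {}"
    proof (intro ballI impI)
      fix c1 c2 assume c1: "c1 \<in> ?C" and c2: "c2 \<in> ?C" and ne: "c1 \<noteq> c2"
      obtain \<alpha> where a: "c1 = orb j k l y \<alpha>" using c1 by blast
      obtain \<beta> where b: "c2 = orb j k l y \<beta>" using c2 by blast
      show "c1 \<inter> c2 = {}"
      proof (rule ccontr)
        assume "c1 \<inter> c2 \<noteq> {}"
        then obtain \<gamma> where "\<gamma> \<in> c1" "\<gamma> \<in> c2" by blast
        then obtain t s where t: "t \<in> Stab l y" "\<gamma> = Comp j k (inv t) \<alpha>"
          and s: "s \<in> Stab l y" "\<gamma> = Comp j k (inv s) \<beta>" unfolding a b orb_def by blast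
        have "c1 = orb j k l y \<gamma>" using orb_member[OF t(1)] a t(2) by simp
        also have "\<dots> = c2" using orb_member[OF s(1)] b s(2) by simp
        finally show False using ne by simp
      qed
    qed
  qed
  then show ?thesis unfolding ncnt_def U .
qed

definition acoef :: "cls \<Rightarrow> cls \<Rightarrow> cls \<Rightarrow> nat" where
  "acoef c d e = (if c \<in> classes \<and> d \<in> classes \<and> e \<in> classes
     then ncnt (fst c) (fst d) (fst e) (rep c) (rep d) (rep e) div card (Stab (fst e) (rep e)) else 0)"

definition Cl :: "nat \<Rightarrow> cls set" where
  "Cl l = {e \<in> classes. fst e = l}"

definition mcnt :: "nat \<Rightarrow> gel \<Rightarrow> gel \<Rightarrow> nat" where
  "mcnt l g y = card {\<sigma> \<in> Inj l l. pushg l \<sigma> g = y}"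

lemma mcnt_conj: "g \<in> Gr l \<Longrightarrow> mcnt l g y = card {t \<in> Sym l. conjK t g = y}"
  unfolding mcnt_def using count_conj[of l l g y] by simp

lemma mcnt_Stab:
  assumes g: "g \<in> Gr l" and t0: "t0 \<in> Sym l" and y: "y = conjK t0 g"
  shows "mcnt l g y = card (Stab l g)"
proof -
  have b0: "bij t0" using t0 by (rule Sym_bij)
  have "card (Stab l g) = card {t \<in> Sym l. conjK t g = y}"
  proof (rule card_bij_eq[of "\<lambda>s. s \<circ> t0" _ _ "\<lambda>t. t \<circ> inv t0"])
    show "inj_on (\<lambda>s. s \<circ> t0) (Stab l g)"
    proof (rule inj_onI)
      fix a b assume "a \<circ> t0 = b \<circ> t0"
      then have "a \<circ> t0 \<circ> inv t0 = b \<circ> t0 \<circ> inv t0" by simp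
      moreover have "t0 \<circ> inv t0 = id" using b0 by (meson bij_is_surj surj_iff)
      ultimately show "a = b" by (simp add: o_assoc[symmetric])
    qed
    show "inj_on (\<lambda>t. t \<circ> inv t0) {t \<in> Sym l. conjK t g = y}"
    proof (rule inj_onI)
      fix a b assume "a \<circ> inv t0 = b \<circ> inv t0"
      then have "a \<circ> inv t0 \<circ> t0 = b \<circ> inv t0 \<circ> t0" by simp
      moreover have "inv t0 \<circ> t0 = id" using b0 by (meson bij_is_inj inv_o_cancel)
      ultimately show "a = b" by (simp add: o_assoc[symmetric])
    qed
    show "(\<lambda>s. s \<circ> t0) ` Stab l g \<subseteq> {t \<in> Sym l. conjK t g = y}"
    proof
      fix t assume "t \<in> (\<lambda>s. s \<circ> t0) ` Stab l g"
      then obtain s where s: "s \<in> Sym l" "conjK s g = g" "t = s \<circ> t0" unfolding Stab_def by blast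
      have "conjK t g = conjK t0 (conjK s g)" using conjK_comp[OF Sym_bij[OF s(1)] b0] s(3) by simp
      then have "conjK t g = y" using s(2) y by simp
      moreover have "t \<in> Sym l" using Sym_comp[OF s(1) t0] s(3) by simp
      ultimately show "t \<in> {t \<in> Sym l. conjK t g = y}" by simp
    qed
    show "(\<lambda>t. t \<circ> inv t0) ` {t \<in> Sym l. conjK t g = y} \<subseteq> Stab l g"
    proof
      fix s assume "s \<in> (\<lambda>t. t \<circ> inv t0) ` {t \<in> Sym l. conjK t g = y}"
      then obtain t where t: "t \<in> Sym l" "conjK t g = y" "s = t \<circ> inv t0" by blast
      have "conjK s g = conjK (inv t0) (conjK t g)"
        using conjK_comp[OF Sym_bij[OF t(1)] bij_imp_bij_inv[OF b0]] t(3) by simp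
      also have "\<dots> = conjK (inv t0) (conjK t0 g)" using t(2) y by simp
      also have "\<dots> = g" by (rule conjK_inv_cancel[OF b0])
      finally have "conjK s g = g" .
      moreover have "s \<in> Sym l" using Sym_comp[OF t(1) Sym_inv[OF t0]] t(3) by simp
      ultimately show "s \<in> Stab l g" unfolding Stab_def by simp
    qed
    show "finite (Stab l g)" by (rule finite_Stab)
    show "finite {t \<in> Sym l. conjK t g = y}" using finite_Sym by simp
  qed
  then show ?thesis using mcnt_conj[OF g] by simp
qed

lemma mcnt_zero:
  assumes e: "e \<in> Cl l" and y: "y \<in> Gr l" and ne: "e \<noteq> (l, Korbit l y)"
  shows "mcnt l (rep e) y = 0"
proof (rule ccontr)
  assume nz: "mcnt l (rep e) y \<noteq> 0"
  have ec: "e \<in> classes" and el: "fst e = l" using e unfolding Cl_def by auto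
  have g: "rep e \<in> Gr l" using rep_props(2)[OF ec] el by simp
  have "card {t \<in> Sym l. conjK t (rep e) = y} \<noteq> 0" using nz mcnt_conj[OF g] by simp
  then obtain t where t: "t \<in> Sym l" "conjK t (rep e) = y"
    by (metis (mono_tags, lifting) Collect_empty_eq card.empty)
  have "y \<in> Korbit l (rep e)" unfolding Korbit_def using t by blast
  then have "Korbit l y = Korbit l (rep e)" by (rule Korbit_mem_eq)
  also have "\<dots> = snd e" using rep_props(3)[OF ec] el by simp
  finally have "e = (l, Korbit l y)" using el by (metis prod.collapse)
  then show False using ne by simp
qed

lemma Cl_y:
  assumes y: "y \<in> Gr l"
  shows "(l, Korbit l y) \<in> Cl l"
proof -
  have "(l, Korbit l y) \<in> classes" unfolding classes_def using y by blast
  then show ?thesis unfolding Cl_def by simp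
qed

lemma pointwise:
  assumes c: "c \<in> classes" and d: "d \<in> classes" and y: "y \<in> Gr l"
  shows "(\<Sum>e\<in>Cl l. acoef c d e * mcnt l (rep e) y) = ncnt (fst c) (fst d) l (rep c) (rep d) y"
proof -
  let ?ey = "(l, Korbit l y)"
  have fin: "finite (Cl l)"
  proof -
    have "Cl l \<subseteq> (\<lambda>g. (l, Korbit l g)) ` Gr l" unfolding Cl_def classes_def by auto
    then show ?thesis by (rule finite_subset) (rule finite_imageI[OF finite_Gr])
  qed
  have ey: "?ey \<in> Cl l" using y by (rule Cl_y)
  have "(\<Sum>e\<in>Cl l. acoef c d e * mcnt l (rep e) y) = acoef c d ?ey * mcnt l (rep ?ey) y"
  proof -
    have "(\<Sum>e\<in>{?ey}. acoef c d e * mcnt l (rep e) y) = (\<Sum>e\<in>Cl l. acoef c d e * mcnt l (rep e) y)"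
    proof (rule sum.mono_neutral_left[OF fin])
      show "{?ey} \<subseteq> Cl l" using ey by simp
      show "\<forall>e\<in>Cl l - {?ey}. acoef c d e * mcnt l (rep e) y = 0"
        using mcnt_zero y by simp
    qed
    then show ?thesis by simp
  qed
  also have "\<dots> = ncnt (fst c) (fst d) l (rep c) (rep d) y"
  proof -
    have eyc: "?ey \<in> classes" using ey unfolding Cl_def by simp
    let ?g0 = "rep ?ey"
    have g0: "?g0 \<in> Gr l" using rep_props(2)[OF eyc] by simp
    have "Korbit l ?g0 = Korbit l y" using rep_props(3)[OF eyc] by simp
    then have "y \<in> Korbit l ?g0" using conjK_id_Sym[of y l] by simp
    then obtain t0 where t0: "t0 \<in> Sym l" "y = conjK t0 ?g0" unfolding Korbit_def by blast
    have gc: "rep c \<in> Gr (fst c)" by (rule rep_props(2)[OF c])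
    have gd: "rep d \<in> Gr (fst d)" by (rule rep_props(2)[OF d])
    have m: "mcnt l ?g0 y = card (Stab l ?g0)" by (rule mcnt_Stab[OF g0 t0])
    have n: "ncnt (fst c) (fst d) l (rep c) (rep d) y = ncnt (fst c) (fst d) l (rep c) (rep d) ?g0"
      using ncnt_inv[OF t0(1) gc gd, of ?g0] t0(2) by simp
    have dv: "card (Stab l ?g0) dvd ncnt (fst c) (fst d) l (rep c) (rep d) ?g0"
      by (rule Stab_dvd_ncnt[OF gc gd g0])
    have a: "acoef c d ?ey = ncnt (fst c) (fst d) l (rep c) (rep d) ?g0 div card (Stab l ?g0)"
      unfolding acoef_def using c d eyc by simp
    show ?thesis unfolding a m n using dv by simp
  qed
  finally show ?thesis .
qed

lemma card_fiber_sum: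
  assumes A: "finite A" and T: "finite T" and h: "h ` A \<subseteq> T"
  shows "card {a \<in> A. F (h a)} = (\<Sum>y\<in>{y \<in> T. F y}. card {a \<in> A. h a = y})"
proof -
  have f: "finite {a \<in> A. F (h a)}" using A by simp
  have fT: "finite {y \<in> T. F y}" using T by simp
  have im: "h ` {a \<in> A. F (h a)} \<subseteq> {y \<in> T. F y}" using h by blast
  have "(\<Sum>y\<in>{y \<in> T. F y}. (\<Sum>x\<in>{x. x \<in> {a \<in> A. F (h a)} \<and> h x = y}. (1::nat))) = (\<Sum>x\<in>{a \<in> A. F (h a)}. 1)"
    by (rule sum.group[OF f fT im])
  moreover have "\<And>y. y \<in> {y \<in> T. F y} \<Longrightarrow> {x. x \<in> {a \<in> A. F (h a)} \<and> h x = y} = {a \<in> A. h a = y}"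
    by auto
  ultimately show ?thesis by simp
qed

lemma Cov_empty:
  assumes "j + k < l" shows "Cov j k l = {}"
proof (rule ccontr)
  assume "Cov j k l \<noteq> {}"
  then obtain \<alpha> where a: "\<alpha> \<in> Cov j k l" by blast
  have "l = card (Uimg j k \<alpha>)" using CovD(3)[OF a] by simp
  also have "\<dots> \<le> card (fst \<alpha> ` {1..j}) + card (snd \<alpha> ` {1..k})" unfolding Uimg_def by (rule card_Un_le)
  also have "\<dots> \<le> card {1..j} + card {1..k}" by (intro add_mono card_image_le) auto
  finally show False using assms by simp
qed

lemma acoef_supp:
  assumes "acoef c d e \<noteq> 0"
  shows "c \<in> classes" "d \<in> classes" "e \<in> classes" "fst e \<le> fst c + fst d"
proof -
  show c: "c \<in> classes" and "d \<in> classes" and "e \<in> classes" using assms unfolding acoef_def by (auto split: if_splits)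
  show "fst e \<le> fst c + fst d"
  proof (rule ccontr)
    assume "\<not> fst e \<le> fst c + fst d"
    then have "Cov (fst c) (fst d) (fst e) = {}" by (intro Cov_empty) simp
    then have "ncnt (fst c) (fst d) (fst e) (rep c) (rep d) (rep e) = 0" unfolding ncnt_def by simp
    then show False using assms unfolding acoef_def by (simp split: if_splits)
  qed
qed

definition CLe :: "nat \<Rightarrow> cls set" where
  "CLe M = {e \<in> classes. fst e \<le> M}"

lemma finite_Cl: "finite (Cl l)"
proof -
  have "Cl l \<subseteq> (\<lambda>g. (l, Korbit l g)) ` Gr l" unfolding Cl_def classes_def by auto
  then show ?thesis by (rule finite_subset) (rule finite_imageI[OF finite_Gr])
qed

lemma finite_CLe: "finite (CLe M)"
proof -
  have "CLe M \<subseteq> (\<Union>l\<in>{..M}. Cl l)" unfolding CLe_def Cl_def by auto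
  moreover have "finite (\<Union>l\<in>{..M}. Cl l)" using finite_Cl by simp
  ultimately show ?thesis by (rule finite_subset)
qed

lemma per_U:
  assumes c: "c \<in> classes" and d: "d \<in> classes"
  fixes H :: "gel \<Rightarrow> gel"
  shows "card {\<alpha> \<in> Cov (fst c) (fst d) l. H (Pr (fst c) (fst d) (rep c) (rep d) \<alpha>) = x}
       = (\<Sum>e\<in>Cl l. acoef c d e * card {\<sigma> \<in> Inj l l. H (pushg l \<sigma> (rep e)) = x})"
proof -
  let ?j = "fst c" and ?k = "fst d" and ?g = "rep c" and ?g' = "rep d"
  let ?Y = "{y \<in> Gr l. H y = x}"
  have gc: "?g \<in> Gr ?j" by (rule rep_props(2)[OF c])
  have gd: "?g' \<in> Gr ?k" by (rule rep_props(2)[OF d])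
  have 1: "card {\<alpha> \<in> Cov ?j ?k l. H (Pr ?j ?k ?g ?g' \<alpha>) = x} = (\<Sum>y\<in>?Y. ncnt ?j ?k l ?g ?g' y)"
    unfolding ncnt_def
  proof (rule card_fiber_sum[OF finite_Cov finite_Gr])
    show "Pr ?j ?k ?g ?g' ` Cov ?j ?k l \<subseteq> Gr l"
    proof
      fix z assume "z \<in> Pr ?j ?k ?g ?g' ` Cov ?j ?k l"
      then obtain \<alpha> where a: "\<alpha> \<in> Cov ?j ?k l" "z = Pr ?j ?k ?g ?g' \<alpha>" by blast
      show "z \<in> Gr l" unfolding a(2) by (rule Pr_Gr[OF Cov_sub[OF a(1)] gc gd])
    qed
  qed
  have 2: "\<And>e. e \<in> Cl l \<Longrightarrow> card {\<sigma> \<in> Inj l l. H (pushg l \<sigma> (rep e)) = x} = (\<Sum>y\<in>?Y. mcnt l (rep e) y)"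
  proof -
    fix e assume e: "e \<in> Cl l"
    have ge: "rep e \<in> Gr l" using e rep_props(2) unfolding Cl_def by fastforce
    show "card {\<sigma> \<in> Inj l l. H (pushg l \<sigma> (rep e)) = x} = (\<Sum>y\<in>?Y. mcnt l (rep e) y)"
      unfolding mcnt_def
      by (rule card_fiber_sum[OF finite_Inj finite_Gr]) (auto intro: pushg_Gr[OF _ ge])
  qed
  have "(\<Sum>e\<in>Cl l. acoef c d e * card {\<sigma> \<in> Inj l l. H (pushg l \<sigma> (rep e)) = x})
      = (\<Sum>e\<in>Cl l. \<Sum>y\<in>?Y. acoef c d e * mcnt l (rep e) y)"
    by (rule sum.cong[OF refl]) (simp add: 2 sum_distrib_left)
  also have "\<dots> = (\<Sum>y\<in>?Y. \<Sum>e\<in>Cl l. acoef c d e * mcnt l (rep e) y)" by (rule sum.swap)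
  also have "\<dots> = (\<Sum>y\<in>?Y. ncnt ?j ?k l ?g ?g' y)"
    by (rule sum.cong[OF refl]) (simp add: pointwise[OF c d])
  finally show ?thesis using 1 by simp
qed

definition z0 :: perm where "z0 = (\<lambda>x. undefined)"

lemma Inj0: "Inj 0 N = {z0}"
  unfolding Inj_def z0_def by simp

lemma Inj_surj:
  assumes "\<sigma> \<in> Inj l l" shows "\<sigma> ` {1..l} = {1..l}"
proof (rule card_subset_eq)
  show "finite {1..l}" by simp
  show "\<sigma> ` {1..l} \<subseteq> {1..l}" by (rule InjD(2)[OF assms])
  show "card (\<sigma> ` {1..l}) = card {1..l}" using InjD(1)[OF assms] by (simp add: card_image)
qed

lemma Cov_l0:
  "card {\<alpha> \<in> Cov l 0 m. R (fst \<alpha>)} = (if m = l then card {\<sigma> \<in> Inj l l. R \<sigma>} else 0)"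
proof (cases "m = l")
  case True
  have "{\<alpha> \<in> Cov l 0 m. R (fst \<alpha>)} = {\<sigma> \<in> Inj l l. R \<sigma>} \<times> {z0}"
  proof
    show "{\<alpha> \<in> Cov l 0 m. R (fst \<alpha>)} \<subseteq> {\<sigma> \<in> Inj l l. R \<sigma>} \<times> {z0}"
      unfolding Cov_def Inj0 True by auto
    show "{\<sigma> \<in> Inj l l. R \<sigma>} \<times> {z0} \<subseteq> {\<alpha> \<in> Cov l 0 m. R (fst \<alpha>)}"
    proof
      fix \<alpha> assume "\<alpha> \<in> {\<sigma> \<in> Inj l l. R \<sigma>} \<times> {z0}"
      then have a: "fst \<alpha> \<in> Inj l l" "R (fst \<alpha>)" "snd \<alpha> = z0" by auto
      have "Uimg l 0 \<alpha> = {1..l}" unfolding Uimg_def using Inj_surj[OF a(1)] by simp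
      then show "\<alpha> \<in> {\<alpha> \<in> Cov l 0 m. R (fst \<alpha>)}"
        unfolding Cov_def Inj0 True using a by (simp add: mem_Times_iff)
    qed
  qed
  then show ?thesis using True by (simp add: card_cartesian_product)
next
  case False
  have "Cov l 0 m = {}"
  proof (rule ccontr)
    assume "Cov l 0 m \<noteq> {}"
    then obtain \<alpha> where a: "\<alpha> \<in> Cov l 0 m" by blast
    have "{1..m} = fst \<alpha> ` {1..l}" using CovD(3)[OF a] unfolding Uimg_def by simp
    then have "card {1..m} = card {1..l}" using InjD(1)[OF CovD(1)[OF a]] by (simp add: card_image)
    then show False using False by simp
  qed
  then show ?thesis using False by simp
qed

lemma AN_decomp:
  assumes e: "e \<in> classes"
  shows "AN N e x = of_nat (\<Sum>U\<in>Pow {1..N}. if card U = fst e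
     then card {\<sigma> \<in> Inj (fst e) (fst e). pushg (card U) (enum U) (pushg (fst e) \<sigma> (rep e)) = x} else 0)"
proof -
  let ?l = "fst e" and ?g = "rep e"
  have g: "?g \<in> Gr ?l" by (rule rep_props(2)[OF e])
  have "card {\<kappa> \<in> Inj ?l N. pushg ?l \<kappa> ?g = x} = card ({\<kappa> \<in> Inj ?l N. pushg ?l \<kappa> ?g = x} \<times> {z0})"
    by (simp add: card_cartesian_product)
  also have "{\<kappa> \<in> Inj ?l N. pushg ?l \<kappa> ?g = x} \<times> {z0} = {\<iota> \<in> Inj ?l N \<times> Inj 0 N. pushg ?l (fst \<iota>) ?g = x}"
    unfolding Inj0 by auto
  also have "card \<dots> = (\<Sum>U\<in>Pow {1..N}. card {\<alpha> \<in> Cov ?l 0 (card U). pushg ?l (fst (Phi ?l 0 U \<alpha>)) ?g = x})"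
    by (rule decomp)
  also have "\<dots> = (\<Sum>U\<in>Pow {1..N}. if card U = ?l
     then card {\<sigma> \<in> Inj ?l ?l. pushg (card U) (enum U) (pushg ?l \<sigma> ?g) = x} else 0)"
  proof (rule sum.cong[OF refl])
    fix U assume U: "U \<in> Pow {1..N}"
    have fU: "finite U" using U finite_subset by auto
    have ie: "inj_on (enum U) {1..card U}" using enum_bij[OF fU] by (simp add: bij_betw_def)
    have "{\<alpha> \<in> Cov ?l 0 (card U). pushg ?l (fst (Phi ?l 0 U \<alpha>)) ?g = x}
        = {\<alpha> \<in> Cov ?l 0 (card U). pushg (card U) (enum U) (pushg ?l (fst \<alpha>) ?g) = x}"
    proof (rule Collect_cong)
      fix \<alpha> show "(\<alpha> \<in> Cov ?l 0 (card U) \<and> pushg ?l (fst (Phi ?l 0 U \<alpha>)) ?g = x) =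
          (\<alpha> \<in> Cov ?l 0 (card U) \<and> pushg (card U) (enum U) (pushg ?l (fst \<alpha>) ?g) = x)"
      proof (cases "\<alpha> \<in> Cov ?l 0 (card U)")
        case True
        have "pushg ?l (fst (Phi ?l 0 U \<alpha>)) ?g = pushg (card U) (enum U) (pushg ?l (fst \<alpha>) ?g)"
          unfolding Phi_def fst_conv by (rule pushg_restrict_comp[OF CovD(1)[OF True] ie g])
        then show ?thesis by simp
      next
        case False then show ?thesis by simp
      qed
    qed
    then show "card {\<alpha> \<in> Cov ?l 0 (card U). pushg ?l (fst (Phi ?l 0 U \<alpha>)) ?g = x}
      = (if card U = ?l then card {\<sigma> \<in> Inj ?l ?l. pushg (card U) (enum U) (pushg ?l \<sigma> ?g) = x} else 0)"
      using Cov_l0[of ?l "card U" "\<lambda>\<sigma>. pushg (card U) (enum U) (pushg ?l \<sigma> ?g) = x"] by simp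
  qed
  finally show ?thesis using AN_eq[OF e] by simp
qed

lemma gmul_solve: "a \<in> Gr N \<Longrightarrow> (gmul a z = x) = (z = gmul (ginv a) x)"
  using gmul_ginv_cancel gmul_ginv_cancel2 by metis

lemma conv_AN:
  assumes c: "c \<in> classes" and d: "d \<in> classes"
  shows "conv N (AN N c) (AN N d) x =
    of_nat (card {\<iota> \<in> Inj (fst c) N \<times> Inj (fst d) N. Pr (fst c) (fst d) (rep c) (rep d) \<iota> = x})"
proof -
  let ?j = "fst c" and ?k = "fst d" and ?g = "rep c" and ?g' = "rep d"
  let ?I1 = "Inj ?j N" and ?I2 = "Inj ?k N"
  have gc: "?g \<in> Gr ?j" by (rule rep_props(2)[OF c])
  have gd: "?g' \<in> Gr ?k" by (rule rep_props(2)[OF d])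
  show ?thesis
  proof (cases "x \<in> Gr N")
    case False
    have E: "{\<iota> \<in> ?I1 \<times> ?I2. Pr ?j ?k ?g ?g' \<iota> = x} = {}"
      using Pr_Gr[OF _ gc gd] False by blast
    show ?thesis unfolding E conv_def using False by simp
  next
    case True
    let ?A = "\<lambda>y. {\<iota>1 \<in> ?I1. pushg ?j \<iota>1 ?g = y}"
    let ?B = "\<lambda>y. {\<iota>2 \<in> ?I2. pushg ?k \<iota>2 ?g' = gmul (ginv y) x}"
    have "conv N (AN N c) (AN N d) x = (\<Sum>y\<in>Gr N. AN N c y * AN N d (gmul (ginv y) x))"
      unfolding conv_def using True by simp
    also have "\<dots> = (\<Sum>y\<in>Gr N. of_nat (card (?A y) * card (?B y)))"
      by (rule sum.cong[OF refl]) (simp add: AN_eq[OF c] AN_eq[OF d])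
    also have "\<dots> = of_nat (\<Sum>y\<in>Gr N. card (?A y) * card (?B y))" by simp
    also have "(\<Sum>y\<in>Gr N. card (?A y) * card (?B y)) = (\<Sum>y\<in>Gr N. \<Sum>\<iota>1\<in>{\<iota>1. \<iota>1 \<in> ?I1 \<and> pushg ?j \<iota>1 ?g = y}. card (?B (pushg ?j \<iota>1 ?g)))"
    proof (rule sum.cong[OF refl])
      fix y assume "y \<in> Gr N"
      have "(\<Sum>\<iota>1\<in>{\<iota>1. \<iota>1 \<in> ?I1 \<and> pushg ?j \<iota>1 ?g = y}. card (?B (pushg ?j \<iota>1 ?g)))
          = (\<Sum>\<iota>1\<in>?A y. card (?B y))" by (rule sum.cong) auto
      then show "card (?A y) * card (?B y) = (\<Sum>\<iota>1\<in>{\<iota>1. \<iota>1 \<in> ?I1 \<and> pushg ?j \<iota>1 ?g = y}. card (?B (pushg ?j \<iota>1 ?g)))"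
        by simp
    qed
    also have "\<dots> = (\<Sum>\<iota>1\<in>?I1. card (?B (pushg ?j \<iota>1 ?g)))"
    proof (rule sum.group[OF finite_Inj finite_Gr])
      show "(\<lambda>\<iota>1. pushg ?j \<iota>1 ?g) ` ?I1 \<subseteq> Gr N" using pushg_Gr[OF _ gc] by blast
    qed
    also have "\<dots> = (\<Sum>\<iota>1\<in>?I1. card {\<iota>2 \<in> ?I2. gmul (pushg ?j \<iota>1 ?g) (pushg ?k \<iota>2 ?g') = x})"
    proof (rule sum.cong[OF refl])
      fix \<iota>1 assume i1: "\<iota>1 \<in> ?I1"
      have a: "pushg ?j \<iota>1 ?g \<in> Gr N" by (rule pushg_Gr[OF i1 gc])
      show "card (?B (pushg ?j \<iota>1 ?g)) = card {\<iota>2 \<in> ?I2. gmul (pushg ?j \<iota>1 ?g) (pushg ?k \<iota>2 ?g') = x}"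
        by (simp only: gmul_solve[OF a])
    qed
    also have "\<dots> = card (SIGMA \<iota>1:?I1. {\<iota>2 \<in> ?I2. gmul (pushg ?j \<iota>1 ?g) (pushg ?k \<iota>2 ?g') = x})"
      by (rule card_SigmaI[symmetric]) (auto simp: finite_Inj)
    also have "(SIGMA \<iota>1:?I1. {\<iota>2 \<in> ?I2. gmul (pushg ?j \<iota>1 ?g) (pushg ?k \<iota>2 ?g') = x})
       = {\<iota> \<in> ?I1 \<times> ?I2. Pr ?j ?k ?g ?g' \<iota> = x}"
      unfolding Pr_def by auto
    finally show ?thesis .
  qed
qed

lemma main_i:
  assumes c: "c \<in> classes" and d: "d \<in> classes"
  shows "conv N (AN N c) (AN N d) x =
    (\<Sum>e\<in>{e\<in>classes. acoef c d e \<noteq> 0}. of_nat (acoef c d e) * AN N e x)"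
proof -
  let ?j = "fst c" and ?k = "fst d" and ?g = "rep c" and ?g' = "rep d"
  let ?M = "?j + ?k"
  let ?W = "\<lambda>e U. if card U = fst e
     then card {\<sigma> \<in> Inj (fst e) (fst e). pushg (card U) (enum U) (pushg (fst e) \<sigma> (rep e)) = x} else 0"
  let ?T = "\<lambda>U. card {\<alpha> \<in> Cov ?j ?k (card U). pushg (card U) (enum U) (Pr ?j ?k ?g ?g' \<alpha>) = x}"
  have gc: "?g \<in> Gr ?j" by (rule rep_props(2)[OF c])
  have gd: "?g' \<in> Gr ?k" by (rule rep_props(2)[OF d])
  have L: "conv N (AN N c) (AN N d) x = of_nat (\<Sum>U\<in>Pow {1..N}. ?T U)"
  proof -
    have "card {\<iota> \<in> Inj ?j N \<times> Inj ?k N. Pr ?j ?k ?g ?g' \<iota> = x}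
      = (\<Sum>U\<in>Pow {1..N}. card {\<alpha> \<in> Cov ?j ?k (card U). Pr ?j ?k ?g ?g' (Phi ?j ?k U \<alpha>) = x})"
      by (rule decomp)
    also have "\<dots> = (\<Sum>U\<in>Pow {1..N}. ?T U)"
    proof (rule sum.cong[OF refl])
      fix U assume U: "U \<in> Pow {1..N}"
      have fU: "finite U" using U finite_subset by auto
      have ie: "inj_on (enum U) {1..card U}" using enum_bij[OF fU] by (simp add: bij_betw_def)
      show "card {\<alpha> \<in> Cov ?j ?k (card U). Pr ?j ?k ?g ?g' (Phi ?j ?k U \<alpha>) = x} = ?T U"
      proof (rule arg_cong[where f=card], rule Collect_cong)
        fix \<alpha>
        show "(\<alpha> \<in> Cov ?j ?k (card U) \<and> Pr ?j ?k ?g ?g' (Phi ?j ?k U \<alpha>) = x) =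
              (\<alpha> \<in> Cov ?j ?k (card U) \<and> pushg (card U) (enum U) (Pr ?j ?k ?g ?g' \<alpha>) = x)"
        proof (cases "\<alpha> \<in> Cov ?j ?k (card U)")
          case True
          have "Pr ?j ?k ?g ?g' (Phi ?j ?k U \<alpha>) = pushg (card U) (enum U) (Pr ?j ?k ?g ?g' \<alpha>)"
            unfolding Phi_Comp by (rule Pr_Comp[OF Cov_sub[OF True] ie gc gd])
          then show ?thesis by simp
        next
          case False then show ?thesis by simp
        qed
      qed
    qed
    finally show ?thesis using conv_AN[OF c d] by simp
  qed
  have sub: "{e\<in>classes. acoef c d e \<noteq> 0} \<subseteq> CLe ?M"
    unfolding CLe_def using acoef_supp by blast
  have R1: "(\<Sum>e\<in>{e\<in>classes. acoef c d e \<noteq> 0}. of_nat (acoef c d e) * AN N e x)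
      = (\<Sum>e\<in>CLe ?M. of_nat (acoef c d e) * AN N e x)"
    by (rule sum.mono_neutral_left[OF finite_CLe sub]) (auto simp: CLe_def)
  have R2: "(\<Sum>e\<in>CLe ?M. of_nat (acoef c d e) * AN N e x)
      = of_nat (\<Sum>e\<in>CLe ?M. \<Sum>U\<in>Pow {1..N}. acoef c d e * ?W e U)"
  proof -
    have "(\<Sum>e\<in>CLe ?M. of_nat (acoef c d e) * AN N e x)
        = (\<Sum>e\<in>CLe ?M. of_nat (acoef c d e * (\<Sum>U\<in>Pow {1..N}. ?W e U)) :: complex)"
    proof (rule sum.cong[OF refl])
      fix e assume "e \<in> CLe ?M"
      then have e: "e \<in> classes" unfolding CLe_def by simp
      show "of_nat (acoef c d e) * AN N e x = (of_nat (acoef c d e * (\<Sum>U\<in>Pow {1..N}. ?W e U)) :: complex)"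
        using AN_decomp[OF e, of N x] by simp
    qed
    also have "\<dots> = of_nat (\<Sum>e\<in>CLe ?M. acoef c d e * (\<Sum>U\<in>Pow {1..N}. ?W e U))" by simp
    finally show ?thesis by (simp add: sum_distrib_left)
  qed
  have R3: "(\<Sum>e\<in>CLe ?M. \<Sum>U\<in>Pow {1..N}. acoef c d e * ?W e U) = (\<Sum>U\<in>Pow {1..N}. \<Sum>e\<in>CLe ?M. acoef c d e * ?W e U)"
    by (rule sum.swap)
  have R4: "\<And>U. (\<Sum>e\<in>CLe ?M. acoef c d e * ?W e U) = ?T U"
  proof -
    fix U
    have "(\<Sum>e\<in>CLe ?M. acoef c d e * ?W e U) = (\<Sum>e\<in>CLe ?M. if fst e = card U then acoef c d e *
        card {\<sigma> \<in> Inj (card U) (card U). pushg (card U) (enum U) (pushg (card U) \<sigma> (rep e)) = x} else 0)"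
      by (rule sum.cong[OF refl]) auto
    also have "\<dots> = (\<Sum>e\<in>{e \<in> CLe ?M. fst e = card U}. acoef c d e *
        card {\<sigma> \<in> Inj (card U) (card U). pushg (card U) (enum U) (pushg (card U) \<sigma> (rep e)) = x})"
      by (rule sum.inter_filter[symmetric, OF finite_CLe])
    also have "\<dots> = ?T U"
    proof (cases "card U \<le> ?M")
      case True
      have "{e \<in> CLe ?M. fst e = card U} = Cl (card U)" unfolding CLe_def Cl_def using True by auto
      then show ?thesis using per_U[OF c d, of "card U" "pushg (card U) (enum U)" x] by simp
    next
      case False
      have E1: "{e \<in> CLe ?M. fst e = card U} = {}" unfolding CLe_def using False by auto
      have E2: "Cov ?j ?k (card U) = {}" using False by (intro Cov_empty) simp
      show ?thesis unfolding E1 E2 by simp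
    qed
    finally show "(\<Sum>e\<in>CLe ?M. acoef c d e * ?W e U) = ?T U" .
  qed
  show ?thesis unfolding L R1 R2 R3 R4 ..
qed

lemma gmul_bij: "z \<in> Gr N \<Longrightarrow> bij_betw (gmul z) (Gr N) (Gr N)"
proof (rule bij_betwI[where g = "gmul (ginv z)"])
  assume z: "z \<in> Gr N"
  show "gmul z \<in> Gr N \<rightarrow> Gr N" using gmul_Gr[OF z] by blast
  show "gmul (ginv z) \<in> Gr N \<rightarrow> Gr N" using gmul_Gr[OF ginv_Gr[OF z]] by blast
  show "\<And>x. x \<in> Gr N \<Longrightarrow> gmul (ginv z) (gmul z x) = x" using gmul_ginv_cancel[OF z] by blast
  show "\<And>y. y \<in> Gr N \<Longrightarrow> gmul z (gmul (ginv z) y) = y" using gmul_ginv_cancel2[OF z] by blast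
qed

lemma conv_assoc: "conv N (conv N f h) k = conv N f (conv N h k)"
proof (rule ext)
  fix x
  show "conv N (conv N f h) k x = conv N f (conv N h k) x"
  proof (cases "x \<in> Gr N")
    case False then show ?thesis unfolding conv_def by simp
  next
    case True
    have "conv N (conv N f h) k x = (\<Sum>y\<in>Gr N. (\<Sum>z\<in>Gr N. f z * h (gmul (ginv z) y)) * k (gmul (ginv y) x))"
      unfolding conv_def if_P[OF True] by (rule sum.cong[OF refl]) simp
    also have "\<dots> = (\<Sum>y\<in>Gr N. \<Sum>z\<in>Gr N. f z * h (gmul (ginv z) y) * k (gmul (ginv y) x))"
      by (simp add: sum_distrib_right)
    also have "\<dots> = (\<Sum>z\<in>Gr N. \<Sum>y\<in>Gr N. f z * h (gmul (ginv z) y) * k (gmul (ginv y) x))"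
      by (rule sum.swap)
    also have "\<dots> = (\<Sum>z\<in>Gr N. f z * (\<Sum>w\<in>Gr N. h w * k (gmul (ginv w) (gmul (ginv z) x))))"
    proof (rule sum.cong[OF refl])
      fix z assume z: "z \<in> Gr N"
      have "(\<Sum>y\<in>Gr N. f z * h (gmul (ginv z) y) * k (gmul (ginv y) x))
          = (\<Sum>w\<in>Gr N. f z * h (gmul (ginv z) (gmul z w)) * k (gmul (ginv (gmul z w)) x))"
        by (rule sum.reindex_bij_betw[symmetric, OF gmul_bij[OF z]])
      also have "\<dots> = (\<Sum>w\<in>Gr N. f z * (h w * k (gmul (ginv w) (gmul (ginv z) x))))"
      proof (rule sum.cong[OF refl])
        fix w assume w: "w \<in> Gr N"
        have "gmul (ginv z) (gmul z w) = w" by (rule gmul_ginv_cancel[OF z])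
        moreover have "gmul (ginv (gmul z w)) x = gmul (ginv w) (gmul (ginv z) x)"
          by (simp add: ginv_gmul[OF z w] gmul_assoc)
        ultimately show "f z * h (gmul (ginv z) (gmul z w)) * k (gmul (ginv (gmul z w)) x)
            = f z * (h w * k (gmul (ginv w) (gmul (ginv z) x)))" by simp
      qed
      also have "\<dots> = f z * (\<Sum>w\<in>Gr N. h w * k (gmul (ginv w) (gmul (ginv z) x)))"
        by (simp add: sum_distrib_left)
      finally show "(\<Sum>y\<in>Gr N. f z * h (gmul (ginv z) y) * k (gmul (ginv y) x))
          = f z * (\<Sum>w\<in>Gr N. h w * k (gmul (ginv w) (gmul (ginv z) x)))" .
    qed
    also have "\<dots> = conv N f (conv N h k) x"
      unfolding conv_def if_P[OF True]
    proof (rule sum.cong[OF refl])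
      fix z assume z: "z \<in> Gr N"
      have "gmul (ginv z) x \<in> Gr N" by (rule gmul_Gr[OF ginv_Gr[OF z] True])
      then show "f z * (\<Sum>w\<in>Gr N. h w * k (gmul (ginv w) (gmul (ginv z) x))) =
        f z * (if gmul (ginv z) x \<in> Gr N then \<Sum>y\<in>Gr N. h y * k (gmul (ginv y) (gmul (ginv z) x)) else 0)"
        by simp
    qed
    finally show ?thesis .
  qed
qed

lemma conv_lin1:
  "conv N (\<lambda>x. \<Sum>i\<in>I. a i * F i x) h = (\<lambda>x. \<Sum>i\<in>I. a i * conv N (F i) h x)"
proof (rule ext)
  fix x
  show "conv N (\<lambda>x. \<Sum>i\<in>I. a i * F i x) h x = (\<Sum>i\<in>I. a i * conv N (F i) h x)"
  proof (cases "x \<in> Gr N")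
    case False then show ?thesis unfolding conv_def by simp
  next
    case True
    have "conv N (\<lambda>x. \<Sum>i\<in>I. a i * F i x) h x = (\<Sum>y\<in>Gr N. \<Sum>i\<in>I. a i * F i y * h (gmul (ginv y) x))"
      unfolding conv_def using True by (simp add: sum_distrib_right)
    also have "\<dots> = (\<Sum>i\<in>I. \<Sum>y\<in>Gr N. a i * F i y * h (gmul (ginv y) x))" by (rule sum.swap)
    also have "\<dots> = (\<Sum>i\<in>I. a i * conv N (F i) h x)"
      unfolding conv_def using True by (simp add: sum_distrib_left mult.assoc)
    finally show ?thesis .
  qed
qed

lemma conv_lin2:
  "conv N f (\<lambda>x. \<Sum>i\<in>I. a i * F i x) = (\<lambda>x. \<Sum>i\<in>I. a i * conv N f (F i) x)"
proof (rule ext)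
  fix x
  show "conv N f (\<lambda>x. \<Sum>i\<in>I. a i * F i x) x = (\<Sum>i\<in>I. a i * conv N f (F i) x)"
  proof (cases "x \<in> Gr N")
    case False then show ?thesis unfolding conv_def by simp
  next
    case True
    have "conv N f (\<lambda>x. \<Sum>i\<in>I. a i * F i x) x = (\<Sum>y\<in>Gr N. \<Sum>i\<in>I. a i * (f y * F i (gmul (ginv y) x)))"
      unfolding conv_def using True by (simp add: sum_distrib_left mult.left_commute)
    also have "\<dots> = (\<Sum>i\<in>I. \<Sum>y\<in>Gr N. a i * (f y * F i (gmul (ginv y) x)))" by (rule sum.swap)
    also have "\<dots> = (\<Sum>i\<in>I. a i * conv N f (F i) x)"
      unfolding conv_def using True by (simp add: sum_distrib_left)
    finally show ?thesis .
  qed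
qed

lemma AN_self_nz:
  assumes e: "e \<in> classes"
  shows "AN (fst e) e (rep e) \<noteq> 0"
proof -
  have g: "rep e \<in> Gr (fst e)" by (rule rep_props(2)[OF e])
  have "AN (fst e) e (rep e) = of_nat (mcnt (fst e) (rep e) (rep e))"
    unfolding AN_eq[OF e] mcnt_def ..
  also have "mcnt (fst e) (rep e) (rep e) = card (Stab (fst e) (rep e))"
    by (rule mcnt_Stab[OF g id_Sym]) simp
  also have "card (Stab (fst e) (rep e)) \<noteq> 0"
    using Stab_id finite_Stab by (metis card_0_eq empty_iff)
  ultimately show ?thesis by simp
qed

lemma AN_other_zero:
  assumes e: "e \<in> classes" and e0: "e0 \<in> classes" and l: "fst e = fst e0" and ne: "e \<noteq> e0"
  shows "AN (fst e0) e (rep e0) = 0"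
proof -
  let ?l = "fst e0"
  have eC: "e \<in> Cl ?l" unfolding Cl_def using e l by simp
  have y: "rep e0 \<in> Gr ?l" by (rule rep_props(2)[OF e0])
  have "e0 = (?l, Korbit ?l (rep e0))" using rep_props(3)[OF e0] by (metis prod.collapse)
  then have "e \<noteq> (?l, Korbit ?l (rep e0))" using ne by simp
  then have "mcnt ?l (rep e) (rep e0) = 0" by (rule mcnt_zero[OF eC y])
  then show ?thesis unfolding AN_eq[OF e] mcnt_def l by simp
qed

lemma AN_big_zero: "N < fst e \<Longrightarrow> AN N e x = 0"
  unfolding AN_def by simp

lemma indep:
  assumes fin: "finite E" and sub: "E \<subseteq> classes"
    and z: "\<And>N x. (\<Sum>e\<in>E. lam e * AN N e x) = 0"
  shows "\<forall>e\<in>E. lam e = 0"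
proof -
  have "\<forall>e\<in>E. fst e = l \<longrightarrow> lam e = 0" for l
  proof (induction l rule: less_induct)
    case (less l)
    show ?case
    proof (intro ballI impI)
      fix e0 assume e0E: "e0 \<in> E" and l0: "fst e0 = l"
      have e0: "e0 \<in> classes" using e0E sub by blast
      have "(\<Sum>e\<in>{e0}. lam e * AN l e (rep e0)) = (\<Sum>e\<in>E. lam e * AN l e (rep e0))"
      proof (rule sum.mono_neutral_left[OF fin])
        show "{e0} \<subseteq> E" using e0E by simp
        show "\<forall>e\<in>E - {e0}. lam e * AN l e (rep e0) = 0"
        proof
          fix e assume eE: "e \<in> E - {e0}"
          have ec: "e \<in> classes" using eE sub by blast
          consider "fst e < l" | "fst e = l" | "l < fst e" by linarith
          then show "lam e * AN l e (rep e0) = 0"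
          proof cases
            case 1 then have "lam e = 0" using less.IH eE by blast
            then show ?thesis by simp
          next
            case 2 then have "AN (fst e0) e (rep e0) = 0"
              using AN_other_zero[OF ec e0] eE l0 by simp
            then show ?thesis using l0 by simp
          next
            case 3 then show ?thesis by (simp add: AN_big_zero)
          qed
        qed
      qed
      then have "lam e0 * AN l e0 (rep e0) = 0" using z[of l "rep e0"] by simp
      moreover have "AN l e0 (rep e0) \<noteq> 0" using AN_self_nz[OF e0] l0 by simp
      ultimately show "lam e0 = 0" by simp
    qed
  qed
  then show ?thesis by blast
qed

definition Sx :: "cls \<Rightarrow> cls \<Rightarrow> cls set" where
  "Sx c d = {e\<in>classes. acoef c d e \<noteq> 0}"

lemma Sx_sub: "Sx c d \<subseteq> CLe (fst c + fst d)"
  unfolding Sx_def CLe_def using acoef_supp by blast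

lemma finite_Sx: "finite (Sx c d)"
  using Sx_sub finite_CLe by (rule finite_subset)

lemma rearr:
  fixes X :: "cls \<Rightarrow> complex"
  assumes "finite I" "finite E"
  shows "(\<Sum>i\<in>I. of_nat (p i) * (\<Sum>e\<in>E. of_nat (q i e) * X e)) = (\<Sum>e\<in>E. of_nat (\<Sum>i\<in>I. p i * q i e) * X e)"
proof -
  have "(\<Sum>i\<in>I. of_nat (p i) * (\<Sum>e\<in>E. of_nat (q i e) * X e)) = (\<Sum>i\<in>I. \<Sum>e\<in>E. of_nat (p i) * of_nat (q i e) * X e)"
    by (simp add: sum_distrib_left mult.assoc)
  also have "\<dots> = (\<Sum>e\<in>E. \<Sum>i\<in>I. of_nat (p i) * of_nat (q i e) * X e)" by (rule sum.swap)
  also have "\<dots> = (\<Sum>e\<in>E. of_nat (\<Sum>i\<in>I. p i * q i e) * X e)"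
    by (simp add: sum_distrib_right of_nat_sum)
  finally show ?thesis .
qed

lemma sum_extend_E:
  assumes e': "e' \<in> classes" and f: "f \<in> classes" and B: "fst e' + fst f \<le> B"
  shows "(\<Sum>e\<in>Sx e' f. of_nat (acoef e' f e) * AN N e x) = (\<Sum>e\<in>CLe B. of_nat (acoef e' f e) * AN N e x)"
proof (rule sum.mono_neutral_left[OF finite_CLe])
  show "Sx e' f \<subseteq> CLe B" using Sx_sub[of e' f] B unfolding CLe_def by auto
  show "\<forall>i\<in>CLe B - Sx e' f. of_nat (acoef e' f i) * AN N i x = 0"
    unfolding CLe_def Sx_def by auto
qed

lemma coef_assoc_E:
  assumes c: "c \<in> classes" and d: "d \<in> classes" and f: "f \<in> classes"
  shows "\<forall>e\<in>CLe (fst c + fst d + fst f). (\<Sum>e'\<in>Sx c d. acoef c d e' * acoef e' f e) = (\<Sum>d'\<in>Sx d f. acoef d f d' * acoef c d' e)"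
proof -
  let ?B = "fst c + fst d + fst f" let ?E = "CLe ?B"
  let ?KL = "\<lambda>e. \<Sum>e'\<in>Sx c d. acoef c d e' * acoef e' f e"
  let ?KR = "\<lambda>e. \<Sum>d'\<in>Sx d f. acoef d f d' * acoef c d' e"
  have L: "conv N (conv N (AN N c) (AN N d)) (AN N f) x = (\<Sum>e\<in>?E. of_nat (?KL e) * AN N e x)" for N x
  proof -
    have "conv N (AN N c) (AN N d) = (\<lambda>x. \<Sum>e'\<in>Sx c d. of_nat (acoef c d e') * AN N e' x)"
      using main_i[OF c d] unfolding Sx_def by (intro ext) simp
    then have "conv N (conv N (AN N c) (AN N d)) (AN N f) x
        = (\<Sum>e'\<in>Sx c d. of_nat (acoef c d e') * conv N (AN N e') (AN N f) x)"
      by (simp add: conv_lin1)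
    also have "\<dots> = (\<Sum>e'\<in>Sx c d. of_nat (acoef c d e') * (\<Sum>e\<in>?E. of_nat (acoef e' f e) * AN N e x))"
    proof (rule sum.cong[OF refl])
      fix e' assume e'S: "e' \<in> Sx c d"
      have e': "e' \<in> classes" using e'S unfolding Sx_def by simp
      have "fst e' \<le> fst c + fst d" using e'S acoef_supp unfolding Sx_def by blast
      then have b: "fst e' + fst f \<le> ?B" by simp
      show "of_nat (acoef c d e') * conv N (AN N e') (AN N f) x
          = of_nat (acoef c d e') * (\<Sum>e\<in>?E. of_nat (acoef e' f e) * AN N e x)"
        using main_i[OF e' f, of N x] sum_extend_E[OF e' f b, of N x] unfolding Sx_def by simp
    qed
    also have "\<dots> = (\<Sum>e\<in>?E. of_nat (?KL e) * AN N e x)"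
      by (rule rearr[OF finite_Sx finite_CLe])
    finally show ?thesis .
  qed
  have R: "conv N (AN N c) (conv N (AN N d) (AN N f)) x = (\<Sum>e\<in>?E. of_nat (?KR e) * AN N e x)" for N x
  proof -
    have "conv N (AN N d) (AN N f) = (\<lambda>x. \<Sum>d'\<in>Sx d f. of_nat (acoef d f d') * AN N d' x)"
      using main_i[OF d f] unfolding Sx_def by (intro ext) simp
    then have "conv N (AN N c) (conv N (AN N d) (AN N f)) x
        = (\<Sum>d'\<in>Sx d f. of_nat (acoef d f d') * conv N (AN N c) (AN N d') x)"
      by (simp add: conv_lin2)
    also have "\<dots> = (\<Sum>d'\<in>Sx d f. of_nat (acoef d f d') * (\<Sum>e\<in>?E. of_nat (acoef c d' e) * AN N e x))"
    proof (rule sum.cong[OF refl])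
      fix d' assume d'S: "d' \<in> Sx d f"
      have d': "d' \<in> classes" using d'S unfolding Sx_def by simp
      have "fst d' \<le> fst d + fst f" using d'S acoef_supp unfolding Sx_def by blast
      then have b: "fst c + fst d' \<le> ?B" by simp
      show "of_nat (acoef d f d') * conv N (AN N c) (AN N d') x
          = of_nat (acoef d f d') * (\<Sum>e\<in>?E. of_nat (acoef c d' e) * AN N e x)"
        using main_i[OF c d', of N x] sum_extend_E[OF c d' b, of N x] unfolding Sx_def by simp
    qed
    also have "\<dots> = (\<Sum>e\<in>?E. of_nat (?KR e) * AN N e x)"
      by (rule rearr[OF finite_Sx finite_CLe])
    finally show ?thesis .
  qed
  have z: "(\<Sum>e\<in>?E. (of_nat (?KL e) - of_nat (?KR e)) * AN N e x) = 0" for N x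
  proof -
    have "(\<Sum>e\<in>?E. (of_nat (?KL e) - of_nat (?KR e)) * AN N e x)
        = (\<Sum>e\<in>?E. of_nat (?KL e) * AN N e x) - (\<Sum>e\<in>?E. of_nat (?KR e) * AN N e x)"
      by (simp add: left_diff_distrib sum_subtractf)
    also have "\<dots> = 0" using L[of N x] R[of N x] conv_assoc by simp
    finally show ?thesis .
  qed
  have H: "\<forall>e\<in>?E. (of_nat (?KL e) - of_nat (?KR e) :: complex) = 0"
    by (rule indep[OF finite_CLe _ z]) (auto simp: CLe_def)
  show ?thesis
  proof
    fix e assume "e \<in> ?E"
    then have "(of_nat (?KL e) - of_nat (?KR e) :: complex) = 0" using H by blast
    then have "(of_nat (?KL e) :: complex) = of_nat (?KR e)" by (simp only: right_minus_eq)
    then show "?KL e = ?KR e" by (simp only: of_nat_eq_iff)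
  qed
qed

lemma coef_assoc:
  assumes c: "c \<in> classes" and d: "d \<in> classes" and f: "f \<in> classes"
  shows "(\<Sum>e'\<in>Sx c d. acoef c d e' * acoef e' f e) = (\<Sum>d'\<in>Sx d f. acoef d f d' * acoef c d' e)"
proof (cases "e \<in> CLe (fst c + fst d + fst f)")
  case True then show ?thesis using coef_assoc_E[OF c d f] by blast
next
  case False
  have 1: "(\<Sum>e'\<in>Sx c d. acoef c d e' * acoef e' f e) = 0"
  proof (rule sum.neutral, rule ballI)
    fix e' assume e'S: "e' \<in> Sx c d"
    have "fst e' \<le> fst c + fst d" using e'S acoef_supp unfolding Sx_def by blast
    then have "acoef e' f e = 0" using False acoef_supp[of e' f e] unfolding CLe_def by fastforce
    then show "acoef c d e' * acoef e' f e = 0" by simp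
  qed
  have 2: "(\<Sum>d'\<in>Sx d f. acoef d f d' * acoef c d' e) = 0"
  proof (rule sum.neutral, rule ballI)
    fix d' assume d'S: "d' \<in> Sx d f"
    have "fst d' \<le> fst d + fst f" using d'S acoef_supp unfolding Sx_def by blast
    then have "acoef c d' e = 0" using False acoef_supp[of c d' e] unfolding CLe_def by fastforce
    then show "acoef d f d' * acoef c d' e = 0" by simp
  qed
  show ?thesis using 1 2 by simp
qed

lemma acoef_nonclass: "e \<notin> classes \<Longrightarrow> acoef c d e = 0"
  unfolding acoef_def by simp

lemma BM:
  assumes A: "finite A" "{c. u c \<noteq> 0} \<subseteq> A" and B: "finite B" "{d. v d \<noteq> 0} \<subseteq> B"
  shows "Bmul acoef u v e = (\<Sum>c\<in>A. \<Sum>d\<in>B. u c * v d * of_nat (acoef c d e))"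
proof (cases "e \<in> classes")
  case False
  then show ?thesis unfolding Bmul_def by (simp add: acoef_nonclass)
next
  case True
  have fu: "finite {c. u c \<noteq> 0}" using A by (rule finite_subset[rotated])
  have fv: "finite {d. v d \<noteq> 0}" using B by (rule finite_subset[rotated])
  have "Bmul acoef u v e = (\<Sum>c\<in>{c. u c \<noteq> 0}. \<Sum>d\<in>{d. v d \<noteq> 0}. u c * v d * of_nat (acoef c d e))"
    unfolding Bmul_def using True by simp
  also have "\<dots> = (\<Sum>c\<in>{c. u c \<noteq> 0}. \<Sum>d\<in>B. u c * v d * of_nat (acoef c d e))"
  proof (rule sum.cong[OF refl], rule sum.mono_neutral_left[OF B(1) B(2)], rule ballI)
    fix c i assume "i \<in> B - {d. v d \<noteq> 0}"
    then have "v i = 0" by simp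
    then show "u c * v i * of_nat (acoef c i e) = 0" by simp
  qed
  also have "\<dots> = (\<Sum>c\<in>A. \<Sum>d\<in>B. u c * v d * of_nat (acoef c d e))"
  proof (rule sum.mono_neutral_left[OF A(1) A(2)], rule ballI)
    fix i assume "i \<in> A - {c. u c \<noteq> 0}"
    then have "u i = 0" by simp
    then show "(\<Sum>d\<in>B. u i * v d * of_nat (acoef i d e)) = 0" by simp
  qed
  finally show ?thesis .
qed

definition supp :: "(cls \<Rightarrow> complex) \<Rightarrow> cls set" where
  "supp u = {c. u c \<noteq> 0}"

lemma BspaceD: "u \<in> Bspace \<Longrightarrow> finite (supp u)" "u \<in> Bspace \<Longrightarrow> supp u \<subseteq> classes"
  unfolding Bspace_def supp_def by auto

lemma supp_Bmul:
  assumes u: "u \<in> Bspace" and v: "v \<in> Bspace"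
  shows "supp (Bmul acoef u v) \<subseteq> (\<Union>c\<in>supp u. \<Union>d\<in>supp v. Sx c d)"
proof
  fix e assume "e \<in> supp (Bmul acoef u v)"
  then have nz: "Bmul acoef u v e \<noteq> 0" unfolding supp_def by simp
  have "Bmul acoef u v e = (\<Sum>c\<in>supp u. \<Sum>d\<in>supp v. u c * v d * of_nat (acoef c d e))"
    by (rule BM[OF BspaceD(1)[OF u] _ BspaceD(1)[OF v]]) (auto simp: supp_def)
  then have s: "(\<Sum>c\<in>supp u. \<Sum>d\<in>supp v. u c * v d * of_nat (acoef c d e)) \<noteq> 0" using nz by simp
  obtain c where c: "c \<in> supp u" and s2: "(\<Sum>d\<in>supp v. u c * v d * of_nat (acoef c d e)) \<noteq> 0"
    using s by (rule sum.not_neutral_contains_not_neutral)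
  obtain d where d: "d \<in> supp v" and s3: "u c * v d * of_nat (acoef c d e) \<noteq> 0"
    using s2 by (rule sum.not_neutral_contains_not_neutral)
  have "acoef c d e \<noteq> 0"
  proof
    assume "acoef c d e = 0" then show False using s3 by simp
  qed
  moreover have "e \<in> classes" using \<open>acoef c d e \<noteq> 0\<close> acoef_supp by blast
  ultimately have "e \<in> Sx c d" unfolding Sx_def by simp
  then show "e \<in> (\<Union>c\<in>supp u. \<Union>d\<in>supp v. Sx c d)" using c d by blast
qed

lemma Bmul_Bspace:
  assumes u: "u \<in> Bspace" and v: "v \<in> Bspace"
  shows "Bmul acoef u v \<in> Bspace"
proof -
  have "finite (\<Union>c\<in>supp u. \<Union>d\<in>supp v. Sx c d)"
    using BspaceD(1)[OF u] BspaceD(1)[OF v] finite_Sx by auto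
  then have "finite (supp (Bmul acoef u v))" using supp_Bmul[OF u v] by (rule finite_subset[rotated])
  moreover have "\<forall>c. c \<notin> classes \<longrightarrow> Bmul acoef u v c = 0" unfolding Bmul_def by simp
  ultimately show ?thesis unfolding Bspace_def supp_def by simp
qed

lemma coef_P:
  assumes c: "c \<in> classes" and d: "d \<in> classes" and fP: "finite P" and sub: "Sx c d \<subseteq> P"
  shows "(\<Sum>e'\<in>P. acoef c d e' * h e') = (\<Sum>e'\<in>Sx c d. acoef c d e' * h e')"
proof (rule sum.mono_neutral_right[OF fP sub])
  show "\<forall>i\<in>P - Sx c d. acoef c d i * h i = 0"
  proof
    fix i assume i: "i \<in> P - Sx c d"
    show "acoef c d i * h i = 0"
    proof (cases "acoef c d i = 0")
      case True then show ?thesis by simp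
    next
      case False
      then have "i \<in> classes" by (rule acoef_supp(3))
      then have "i \<in> Sx c d" using False unfolding Sx_def by simp
      then show ?thesis using i by simp
    qed
  qed
qed

lemma Bmul_assoc:
  assumes u: "u \<in> Bspace" and v: "v \<in> Bspace" and w: "w \<in> Bspace"
  shows "Bmul acoef (Bmul acoef u v) w = Bmul acoef u (Bmul acoef v w)"
proof (rule ext)
  fix e
  let ?A = "supp u" and ?B = "supp v" and ?C = "supp w"
  let ?P = "\<Union>c\<in>?A. \<Union>d\<in>?B. Sx c d" and ?Q = "\<Union>d\<in>?B. \<Union>f\<in>?C. Sx d f"
  have fA: "finite ?A" and fB: "finite ?B" and fC: "finite ?C"
    using BspaceD(1)[OF u] BspaceD(1)[OF v] BspaceD(1)[OF w] by auto
  have fP: "finite ?P" using fA fB finite_Sx by auto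
  have fQ: "finite ?Q" using fB fC finite_Sx by auto
  have sA: "{c. u c \<noteq> 0} \<subseteq> ?A" and sB: "{c. v c \<noteq> 0} \<subseteq> ?B" and sC: "{c. w c \<noteq> 0} \<subseteq> ?C"
    unfolding supp_def by auto
  have sP: "{c. Bmul acoef u v c \<noteq> 0} \<subseteq> ?P" using supp_Bmul[OF u v] unfolding supp_def .
  have sQ: "{c. Bmul acoef v w c \<noteq> 0} \<subseteq> ?Q" using supp_Bmul[OF v w] unfolding supp_def .
  let ?T = "\<lambda>c d f. u c * v d * w f"
  have "Bmul acoef (Bmul acoef u v) w e = (\<Sum>e'\<in>?P. \<Sum>f\<in>?C. Bmul acoef u v e' * w f * of_nat (acoef e' f e))"
    by (rule BM[OF fP sP fC sC])
  also have "\<dots> = (\<Sum>e'\<in>?P. \<Sum>f\<in>?C. \<Sum>c\<in>?A. \<Sum>d\<in>?B. ?T c d f * (of_nat (acoef c d e') * of_nat (acoef e' f e)))"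
    by (simp add: BM[OF fA sA fB sB] sum_distrib_right sum_distrib_left mult_ac)
  also have "\<dots> = (\<Sum>f\<in>?C. \<Sum>e'\<in>?P. \<Sum>c\<in>?A. \<Sum>d\<in>?B. ?T c d f * (of_nat (acoef c d e') * of_nat (acoef e' f e)))"
    by (rule sum.swap)
  also have "\<dots> = (\<Sum>f\<in>?C. \<Sum>c\<in>?A. \<Sum>d\<in>?B. \<Sum>e'\<in>?P. ?T c d f * (of_nat (acoef c d e') * of_nat (acoef e' f e)))"
    by (rule sum.cong[OF refl], subst sum.swap, rule sum.cong[OF refl], rule sum.swap)
  also have "\<dots> = (\<Sum>c\<in>?A. \<Sum>d\<in>?B. \<Sum>f\<in>?C. \<Sum>e'\<in>?P. ?T c d f * (of_nat (acoef c d e') * of_nat (acoef e' f e)))"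
    by (subst sum.swap, rule sum.cong[OF refl], rule sum.swap)
  also have "\<dots> = (\<Sum>c\<in>?A. \<Sum>d\<in>?B. \<Sum>f\<in>?C. ?T c d f * of_nat (\<Sum>e'\<in>?P. acoef c d e' * acoef e' f e))"
    by (simp add: sum_distrib_left of_nat_sum)
  also have "\<dots> = (\<Sum>c\<in>?A. \<Sum>d\<in>?B. \<Sum>f\<in>?C. ?T c d f * of_nat (\<Sum>d'\<in>?Q. acoef d f d' * acoef c d' e))"
  proof (intro sum.cong[OF refl])
    fix c d f assume c: "c \<in> ?A" and d: "d \<in> ?B" and f: "f \<in> ?C"
    have cc: "c \<in> classes" using c BspaceD(2)[OF u] by blast
    have dc: "d \<in> classes" using d BspaceD(2)[OF v] by blast
    have fc: "f \<in> classes" using f BspaceD(2)[OF w] by blast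
    have "(\<Sum>e'\<in>?P. acoef c d e' * acoef e' f e) = (\<Sum>e'\<in>Sx c d. acoef c d e' * acoef e' f e)"
      by (rule coef_P[OF cc dc fP]) (use c d in blast)
    also have "\<dots> = (\<Sum>d'\<in>Sx d f. acoef d f d' * acoef c d' e)" by (rule coef_assoc[OF cc dc fc])
    also have "\<dots> = (\<Sum>d'\<in>?Q. acoef d f d' * acoef c d' e)"
      by (rule coef_P[symmetric, OF dc fc fQ]) (use d f in blast)
    finally show "?T c d f * of_nat (\<Sum>e'\<in>?P. acoef c d e' * acoef e' f e)
        = ?T c d f * of_nat (\<Sum>d'\<in>?Q. acoef d f d' * acoef c d' e)" by simp
  qed
  also have "\<dots> = (\<Sum>c\<in>?A. \<Sum>d\<in>?B. \<Sum>f\<in>?C. \<Sum>d'\<in>?Q. ?T c d f * (of_nat (acoef d f d') * of_nat (acoef c d' e)))"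
    by (simp add: sum_distrib_left of_nat_sum)
  also have "\<dots> = (\<Sum>c\<in>?A. \<Sum>d'\<in>?Q. \<Sum>d\<in>?B. \<Sum>f\<in>?C. ?T c d f * (of_nat (acoef d f d') * of_nat (acoef c d' e)))"
  proof (rule sum.cong[OF refl])
    fix c
    have "(\<Sum>d\<in>?B. \<Sum>f\<in>?C. \<Sum>d'\<in>?Q. ?T c d f * (of_nat (acoef d f d') * of_nat (acoef c d' e)))
        = (\<Sum>d\<in>?B. \<Sum>d'\<in>?Q. \<Sum>f\<in>?C. ?T c d f * (of_nat (acoef d f d') * of_nat (acoef c d' e)))"
      by (rule sum.cong[OF refl], rule sum.swap)
    also have "\<dots> = (\<Sum>d'\<in>?Q. \<Sum>d\<in>?B. \<Sum>f\<in>?C. ?T c d f * (of_nat (acoef d f d') * of_nat (acoef c d' e)))"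
      by (rule sum.swap)
    finally show "(\<Sum>d\<in>?B. \<Sum>f\<in>?C. \<Sum>d'\<in>?Q. ?T c d f * (of_nat (acoef d f d') * of_nat (acoef c d' e)))
        = (\<Sum>d'\<in>?Q. \<Sum>d\<in>?B. \<Sum>f\<in>?C. ?T c d f * (of_nat (acoef d f d') * of_nat (acoef c d' e)))" .
  qed
  also have "\<dots> = (\<Sum>c\<in>?A. \<Sum>d'\<in>?Q. u c * Bmul acoef v w d' * of_nat (acoef c d' e))"
    by (simp add: BM[OF fB sB fC sC] sum_distrib_right sum_distrib_left mult_ac)
  also have "\<dots> = Bmul acoef u (Bmul acoef v w) e"
    by (rule BM[symmetric, OF fA sA fQ sQ])
  finally show "Bmul acoef (Bmul acoef u v) w e = Bmul acoef u (Bmul acoef v w) e" .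
qed

lemma Bbasis_supp: "{c'. Bbasis c c' \<noteq> 0} = {c}"
  unfolding Bbasis_def by auto

theorem theorem1p1:
  "\<exists>a :: cls \<Rightarrow> cls \<Rightarrow> cls \<Rightarrow> nat.
     (\<forall>c\<in>classes. \<forall>d\<in>classes. finite {e\<in>classes. a c d e \<noteq> 0}) \<and>
     (\<forall>N. \<forall>c\<in>classes. \<forall>d\<in>classes.
        conv N (AN N c) (AN N d) =
        (\<lambda>x. \<Sum>e\<in>{e\<in>classes. a c d e \<noteq> 0}. of_nat (a c d e) * AN N e x)) \<and>
     (\<forall>c\<in>classes. \<forall>d\<in>classes.
        Bmul a (Bbasis c) (Bbasis d) = (\<lambda>e. if e \<in> classes then of_nat (a c d e) else 0)) \<and>
     (\<forall>u\<in>Bspace. \<forall>v\<in>Bspace. Bmul a u v \<in> Bspace) \<and>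
     (\<forall>u\<in>Bspace. \<forall>v\<in>Bspace. \<forall>w\<in>Bspace.
        Bmul a (Bmul a u v) w = Bmul a u (Bmul a v w))"
proof (intro exI[of _ acoef] conjI ballI allI)
  fix c d assume "c \<in> classes" "d \<in> classes"
  show "finite {e\<in>classes. acoef c d e \<noteq> 0}" using finite_Sx[of c d] unfolding Sx_def .
next
  fix N c d assume c: "c \<in> classes" and d: "d \<in> classes"
  show "conv N (AN N c) (AN N d) = (\<lambda>x. \<Sum>e\<in>{e\<in>classes. acoef c d e \<noteq> 0}. of_nat (acoef c d e) * AN N e x)"
    by (rule ext) (rule main_i[OF c d])
next
  fix c d assume "c \<in> classes" "d \<in> classes"
  show "Bmul acoef (Bbasis c) (Bbasis d) = (\<lambda>e. if e \<in> classes then of_nat (acoef c d e) else 0)"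
    unfolding Bmul_def Bbasis_supp by (rule ext) (simp add: Bbasis_def)
next
  fix u v assume "u \<in> Bspace" "v \<in> Bspace"
  then show "Bmul acoef u v \<in> Bspace" by (rule Bmul_Bspace)
next
  fix u v w assume "u \<in> Bspace" "v \<in> Bspace" "w \<in> Bspace"
  then show "Bmul acoef (Bmul acoef u v) w = Bmul acoef u (Bmul acoef v w)" by (rule Bmul_assoc)
qed

end
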